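(* Let $f\in C(\Omega)$ with $f\ge 0$ in $\Omega$, and let $u$ be a viscosity solution of the Bellman equation $H(D^2u(x),f(x))=0$ in $\Omega$. Then $u$ is a viscosity solution of the Monge–Ampère equation $M(D^2u(x),f(x))=0$ in $\Omega$ on the set of convex functions (in particular $u$ is convex).
   Context: Let $d\ge 2$ and let $\Omega\subset\mathbb R^d$ be a bounded open strictly convex domain. $\mathbb S$ denotes the set of real symmetric $d\times d$ matrices, $\mathbb S_+=\{A\in\mathbb S: A\ge 0\}$ (positive semidefinite matrices), $\mathbb S_1=\{B\in\mathbb S_+:\operatorname{tr}B=1\}$, and $A:B=\operatorname{tr}(A^TB)$ is the Frobenius inner product. For $A\in\mathbb S$ and $f\in[0,\infty)$ define the Bellman operator $H(A,f)=\sup_{B\in\mathbb S_1}\bigl(-B:A+f\sqrt[d]{\det B}\bigr)$ and the Monge–Ampère operator $M(A,f)=(f/d)^d-\det A$. $\mathrm{USC}(G)$, $\mathrm{LSC}(G)$ denote upper/lower semicontinuous functions on $G$. Viscosity notions: for $F:\mathbb S\times\Omega\to\mathbb R$ (here $F(A,x)=H(A,f(x))$ or $F(A,x)=M(A,f(x))$), a function $u\in\mathrm{USC}(\Omega)$ (resp. $u\in\mathrm{LSC}(\Omega)$) is a viscosity subsolution (resp. supersolution) of $F(D^2u(x),x)=0$ in $\Omega$ if for every $\varphi\in C^2(\Omega)$ such that $u-\varphi$ has a local maximum (resp. minimum) at $x\in\Omega$ one has $F(D^2\varphi(x),x)\le 0$ (resp. $\ge 0$); a viscosity solution is both a sub-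 and a supersolution. The function $u$ is a viscosity subsolution (resp. supersolution) on the set of convex functions if $u$ is convex and the same inequality holds for every convex $\varphi\in C^2(\Omega)$ such that $u-\varphi$ has a local maximum (resp. minimum) at $x\in\Omega$; a viscosity solution on the set of convex functions is both. *)

theory Defs
  imports "HOL-Analysis.Analysis"
begin

type_synonym 'n mat = "real^'n^'n"

definition sym_mat :: "'n::finite mat \<Rightarrow> bool" where
  "sym_mat A \<longleftrightarrow> transpose A = A"

definition psd_mat :: "'n::finite mat \<Rightarrow> bool" where
  "psd_mat A \<longleftrightarrow> sym_mat A \<and> (\<forall>x. 0 \<le> x \<bullet> (A *v x))"

definition S1 :: "'n::finite mat set" where
  "S1 = {B. psd_mat B \<and> trace B = 1}"

definition frob :: "'n::finite mat \<Rightarrow> 'n mat \<Rightarrow> real" where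
  "frob A B = trace (transpose A ** B)"

definition bellmanH :: "'n::finite mat \<Rightarrow> real \<Rightarrow> real" where
  "bellmanH A f = (SUP B\<in>(S1::'n mat set). - frob B A + f * root CARD('n) (det B))"

definition mongeM :: "'n::finite mat \<Rightarrow> real \<Rightarrow> real" where
  "mongeM A f = (f / real CARD('n)) ^ CARD('n) - det A"

definition strictly_convex_set :: "(real^'n::finite) set \<Rightarrow> bool" where
  "strictly_convex_set \<Omega> \<longleftrightarrow> convex \<Omega> \<and>
     (\<forall>x\<in>closure \<Omega>. \<forall>y\<in>closure \<Omega>. x \<noteq> y \<longrightarrow> open_segment x y \<subseteq> \<Omega>)"

definition usc_on :: "(real^'n::finite) set \<Rightarrow> (real^'n \<Rightarrow> real) \<Rightarrow> bool" where
  "usc_on G u \<longleftrightarrow> (\<forall>x\<in>G. \<forall>t. u x < t \<longrightarrow> (\<forall>\<^sub>F y in at x within G. u y < t))"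

definition lsc_on :: "(real^'n::finite) set \<Rightarrow> (real^'n \<Rightarrow> real) \<Rightarrow> bool" where
  "lsc_on G u \<longleftrightarrow> (\<forall>x\<in>G. \<forall>t. t < u x \<longrightarrow> (\<forall>\<^sub>F y in at x within G. t < u y))"

definition C2_on :: "(real^'n::finite) set \<Rightarrow> (real^'n \<Rightarrow> real) \<Rightarrow>
    (real^'n \<Rightarrow> real^'n) \<Rightarrow> (real^'n \<Rightarrow> 'n mat) \<Rightarrow> bool" where
  "C2_on G phi Dphi D2phi \<longleftrightarrow>
     (\<forall>x\<in>G. (phi has_derivative (\<lambda>h. Dphi x \<bullet> h)) (at x)) \<and>
     (\<forall>x\<in>G. (Dphi has_derivative (\<lambda>h. D2phi x *v h)) (at x)) \<and>
     continuous_on G D2phi"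

definition local_max_at :: "(real^'n::finite) set \<Rightarrow> (real^'n \<Rightarrow> real) \<Rightarrow> real^'n \<Rightarrow> bool" where
  "local_max_at G g x \<longleftrightarrow> (\<exists>e>0. \<forall>y\<in>G \<inter> ball x e. g y \<le> g x)"

definition local_min_at :: "(real^'n::finite) set \<Rightarrow> (real^'n \<Rightarrow> real) \<Rightarrow> real^'n \<Rightarrow> bool" where
  "local_min_at G g x \<longleftrightarrow> (\<exists>e>0. \<forall>y\<in>G \<inter> ball x e. g x \<le> g y)"

definition visc_sub :: "(real^'n::finite) set \<Rightarrow> ('n mat \<Rightarrow> real^'n \<Rightarrow> real) \<Rightarrow> (real^'n \<Rightarrow> real) \<Rightarrow> bool" where
  "visc_sub G F u \<longleftrightarrow> usc_on G u \<and>
     (\<forall>phi Dphi D2phi x. C2_on G phi Dphi D2phi \<and> x \<in> G \<and> local_max_at G (\<lambda>y. u y - phi y) x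
        \<longrightarrow> F (D2phi x) x \<le> 0)"

definition visc_super :: "(real^'n::finite) set \<Rightarrow> ('n mat \<Rightarrow> real^'n \<Rightarrow> real) \<Rightarrow> (real^'n \<Rightarrow> real) \<Rightarrow> bool" where
  "visc_super G F u \<longleftrightarrow> lsc_on G u \<and>
     (\<forall>phi Dphi D2phi x. C2_on G phi Dphi D2phi \<and> x \<in> G \<and> local_min_at G (\<lambda>y. u y - phi y) x
        \<longrightarrow> F (D2phi x) x \<ge> 0)"

definition visc_sol :: "(real^'n::finite) set \<Rightarrow> ('n mat \<Rightarrow> real^'n \<Rightarrow> real) \<Rightarrow> (real^'n \<Rightarrow> real) \<Rightarrow> bool" where
  "visc_sol G F u \<longleftrightarrow> visc_sub G F u \<and> visc_super G F u"

definition visc_sub_cvx :: "(real^'n::finite) set \<Rightarrow> ('n mat \<Rightarrow> real^'n \<Rightarrow> real) \<Rightarrow> (real^'n \<Rightarrow> real) \<Rightarrow> bool" where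
  "visc_sub_cvx G F u \<longleftrightarrow> usc_on G u \<and> convex_on G u \<and>
     (\<forall>phi Dphi D2phi x. C2_on G phi Dphi D2phi \<and> convex_on G phi \<and> x \<in> G \<and>
        local_max_at G (\<lambda>y. u y - phi y) x \<longrightarrow> F (D2phi x) x \<le> 0)"

definition visc_super_cvx :: "(real^'n::finite) set \<Rightarrow> ('n mat \<Rightarrow> real^'n \<Rightarrow> real) \<Rightarrow> (real^'n \<Rightarrow> real) \<Rightarrow> bool" where
  "visc_super_cvx G F u \<longleftrightarrow> lsc_on G u \<and> convex_on G u \<and>
     (\<forall>phi Dphi D2phi x. C2_on G phi Dphi D2phi \<and> convex_on G phi \<and> x \<in> G \<and>
        local_min_at G (\<lambda>y. u y - phi y) x \<longrightarrow> F (D2phi x) x \<ge> 0)"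

definition visc_sol_cvx :: "(real^'n::finite) set \<Rightarrow> ('n mat \<Rightarrow> real^'n \<Rightarrow> real) \<Rightarrow> (real^'n \<Rightarrow> real) \<Rightarrow> bool" where
  "visc_sol_cvx G F u \<longleftrightarrow> visc_sub_cvx G F u \<and> visc_super_cvx G F u"

end

theory Submission
  imports Defs
begin

definition dmat :: "real^'n::finite \<Rightarrow> 'n mat" where
  "dmat l = (\<chi> i j. if i = j then l$i else 0)"

definition outer :: "real^'n::finite \<Rightarrow> 'n mat" where
  "outer v = (\<chi> i j. v$i * v$j)"

lemma dmat_mulv: "dmat l *v x = (\<chi> i. l$i * x$i)"
proof -
  have "(\<Sum>j\<in>UNIV. (if i = j then l$i else 0) * x$j) = l$i * x$i" for i
  proof -
    have "(\<Sum>j\<in>UNIV. (if i = j then l$i else 0) * x$j) = (\<Sum>j\<in>UNIV. if j = i then l$i * x$j else 0)"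
      by (rule sum.cong) auto
    then show ?thesis by simp
  qed
  then show ?thesis unfolding matrix_vector_mult_def dmat_def by (simp add: vec_eq_iff)
qed

lemma diag_entry:
  fixes G M :: "real^'n::finite^'n"
  shows "(transpose G ** M ** G)$k$k = column k G \<bullet> (M *v column k G)"
proof -
  have "(transpose G ** M ** G)$k$k = (\<Sum>j\<in>UNIV. (\<Sum>i\<in>UNIV. G$i$k * M$i$j) * G$j$k)"
    by (simp add: matrix_matrix_mult_def transpose_def)
  also have "\<dots> = (\<Sum>j\<in>UNIV. \<Sum>i\<in>UNIV. G$i$k * (M$i$j * G$j$k))"
    by (simp add: sum_distrib_right mult.assoc)
  also have "\<dots> = (\<Sum>i\<in>UNIV. \<Sum>j\<in>UNIV. G$i$k * (M$i$j * G$j$k))"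
    by (rule sum.swap)
  also have "\<dots> = column k G \<bullet> (M *v column k G)"
    by (simp add: inner_vec_def column_def matrix_vector_mult_def sum_distrib_left)
  finally show ?thesis .
qed
lemma quad_conj:
  fixes Q A :: "real^'n::finite^'n"
  shows "x \<bullet> ((transpose Q ** A ** Q) *v x) = (Q *v x) \<bullet> (A *v (Q *v x))"
proof -
  have "x \<bullet> ((transpose Q ** A ** Q) *v x) = x \<bullet> (transpose Q *v (A *v (Q *v x)))"
    by (simp add: matrix_vector_mul_assoc[symmetric])
  also have "\<dots> = (Q *v x) \<bullet> (A *v (Q *v x))"
    by (metis dot_lmul_matrix inner_commute transpose_matrix_vector)
  finally show ?thesis .
qed

lemma sym_entry: "sym_mat M \<Longrightarrow> M$j$i = M$i$j"
proof -
  assume "sym_mat M"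
  then have "transpose M $ i $ j = M $ i $ j" unfolding sym_mat_def by simp
  then show ?thesis by (simp add: transpose_def)
qed

lemma col_nth[simp]: "column k M $ i = M $ i $ k"
  by (simp add: column_def)

lemma givens:
  fixes M :: "real^'n::finite^'n"
  assumes sym: "sym_mat M" and ij: "i \<noteq> j" and b0: "M$i$j \<noteq> 0"
  shows "\<exists>G. orthogonal_matrix G \<and>
     (\<Sum>k\<in>UNIV. (M$k$k)^2) < (\<Sum>k\<in>UNIV. ((transpose G ** M ** G)$k$k)^2)"
proof -
  define a where "a = M$i$i"
  define c where "c = M$j$j"
  define b where "b = M$i$j"
  define r where "r = sqrt ((a-c)^2 + 4*b^2)"
  have r2: "r^2 = (a-c)^2 + 4*b^2" unfolding r_def by simp
  have "b \<noteq> 0" using b0 b_def by simp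
  then have rpos: "r > 0" unfolding r_def by (simp add: add_nonneg_pos)
  have "((a-c)/r)^2 + (2*b/r)^2 = ((a-c)^2 + 4*b^2)/r^2"
    by (simp add: power_divide add_divide_distrib power_mult_distrib)
  also have "\<dots> = 1" using rpos by (simp add: r2[symmetric])
  finally have h1: "((a-c)/r)^2 + (2*b/r)^2 = 1" .
  obtain t where t: "(a-c)/r = cos t" "2*b/r = sin t"
    using sincos_total_2pi_le[OF h1] by auto
  define cs where "cs = cos (t/2)"
  define zz where "zz = sin (t/2)"
  have tt: "t = 2*(t/2)" by simp
  have p: "cs^2 - zz^2 = (a-c)/r" unfolding cs_def zz_def t
    using cos_double[of "t/2"] by simp
  have q: "2*cs*zz = 2*b/r" unfolding cs_def zz_def t
    using sin_double[of "t/2"] by simp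
  have one: "cs^2 + zz^2 = 1" unfolding cs_def zz_def by simp
  define col where "col k = (if k = i then cs *\<^sub>R axis i 1 + zz *\<^sub>R axis j 1
      else if k = j then (-zz) *\<^sub>R axis i 1 + cs *\<^sub>R axis j 1 else (axis k 1::real^'n))" for k
  define G :: "real^'n^'n" where "G = (\<chi> r k. col k $ r)"
  have colG: "column k G = col k" for k by (simp add: G_def column_def vec_eq_iff)
  have orth: "orthogonal_matrix G"
    unfolding orthogonal_matrix_orthonormal_columns colG norm_eq_1
  proof (intro conjI allI impI)
    fix k show "col k \<bullet> col k = 1"
      using ij one by (simp add: col_def inner_add_left inner_add_right inner_diff_left inner_diff_right inner_axis_axis power2_eq_square)
  next
    fix k l :: 'n assume "k \<noteq> l"
    then show "orthogonal (col k) (col l)"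
      using ij by (auto simp: orthogonal_def col_def inner_add_left inner_add_right inner_diff_left inner_diff_right inner_axis_axis)
  qed
  have symij: "M$j$i = b" using sym_entry[OF sym] b_def by simp
  have Nk: "(transpose G ** M ** G)$k$k = M$k$k" if "k \<noteq> i" "k \<noteq> j" for k
    using that unfolding diag_entry colG by (simp add: col_def matrix_vector_mult_basis inner_axis')
  have Ni: "(transpose G ** M ** G)$i$i = cs*(cs*a + zz*b) + zz*(cs*b + zz*c)"
    using ij symij unfolding diag_entry colG by (simp add: col_def matrix_vector_right_distrib matrix_vector_mult_diff_distrib matrix_vector_mult_scaleR
        matrix_vector_mult_basis inner_add_left inner_add_right inner_diff_left inner_diff_right inner_axis' a_def b_def c_def)
  have Nj: "(transpose G ** M ** G)$j$j = (-zz)*((-zz)*a + cs*b) + cs*((-zz)*b + cs*c)"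
    using ij symij unfolding diag_entry colG by (simp add: col_def matrix_vector_right_distrib matrix_vector_mult_diff_distrib matrix_vector_mult_scaleR
        matrix_vector_mult_basis inner_add_left inner_add_right inner_diff_left inner_diff_right inner_axis' a_def b_def c_def)
  define Xi where "Xi = cs*(cs*a + zz*b) + zz*(cs*b + zz*c)"
  define Xj where "Xj = (-zz)*((-zz)*a + cs*b) + cs*((-zz)*b + cs*c)"
  have "Xi + Xj = (cs^2 + zz^2) * (a + c)" unfolding Xi_def Xj_def by (simp add: power2_eq_square algebra_simps)
  then have s1: "Xi + Xj = a + c" using one by simp
  have "Xi - Xj = (cs^2 - zz^2)*(a-c) + 2*(2*cs*zz)*b" unfolding Xi_def Xj_def by (simp add: power2_eq_square algebra_simps)
  also have "\<dots> = ((a-c)^2 + 4*b^2)/r" unfolding p q using rpos by (simp add: field_simps power2_eq_square)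
  also have "\<dots> = r^2/r" by (simp add: r2)
  also have "\<dots> = r" using rpos by (simp add: power2_eq_square)
  finally have s2: "Xi - Xj = r" .
  have "Xi^2 + Xj^2 = ((Xi+Xj)^2 + (Xi-Xj)^2)/2" by (simp add: power2_eq_square algebra_simps)
  also have "\<dots> = ((a+c)^2 + r^2)/2" using s1 s2 by simp
  also have "\<dots> > ((a+c)^2 + (a-c)^2)/2" using r2 \<open>b \<noteq> 0\<close> by simp
  also have "((a+c)^2 + (a-c)^2)/2 = a^2 + c^2" by (simp add: power2_eq_square algebra_simps)
  finally have key: "a^2 + c^2 < Xi^2 + Xj^2" .
  have split: "(\<Sum>k\<in>UNIV. h k) = h i + h j + (\<Sum>k\<in>UNIV - {i} - {j}. h k)" for h :: "'n \<Rightarrow> real"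
  proof -
    have "(\<Sum>k\<in>UNIV. h k) = h i + (\<Sum>k\<in>UNIV - {i}. h k)" by (rule sum.remove) auto
    also have "(\<Sum>k\<in>UNIV - {i}. h k) = h j + (\<Sum>k\<in>UNIV - {i} - {j}. h k)"
      using ij by (intro sum.remove) auto
    finally show ?thesis by simp
  qed
  have rest: "(\<Sum>k\<in>UNIV - {i} - {j}. ((transpose G ** M ** G)$k$k)^2) = (\<Sum>k\<in>UNIV - {i} - {j}. (M$k$k)^2)"
    by (rule sum.cong) (auto simp: Nk)
  show ?thesis
    apply (rule exI[of _ G])
    using orth key rest unfolding split[of "\<lambda>k. (M$k$k)^2"] split[of "\<lambda>k. ((transpose G ** M ** G)$k$k)^2"]
    by (simp add: Ni Nj Xi_def Xj_def a_def c_def)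
qed

lemma orthD: "orthogonal_matrix Q \<Longrightarrow> transpose Q ** Q = mat 1 \<and> Q ** transpose Q = mat 1"
  by (simp add: orthogonal_matrix_def)

lemma spectral:
  fixes A :: "'n::finite mat"
  assumes symA: "sym_mat A"
  shows "\<exists>Q l. orthogonal_matrix Q \<and> A = Q ** dmat l ** transpose Q"
proof -
  define Og where "Og = {Q::real^'n^'n. transpose Q ** Q = mat 1}"
  define D where "D = (\<lambda>Q::real^'n^'n. \<Sum>k\<in>UNIV. ((transpose Q ** A ** Q)$k$k)^2)"
  have TQQ: "transpose Q ** Q = (\<chi> i j. \<Sum>k\<in>UNIV. Q$k$i * Q$k$j)" for Q :: "real^'n^'n"
    by (simp add: matrix_matrix_mult_def transpose_def)
  have cont1: "continuous_on UNIV (\<lambda>Q::real^'n^'n. transpose Q ** Q)"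
    unfolding TQQ by (intro continuous_on_vec_lambda continuous_intros)
  have closedOg: "closed Og"
    unfolding Og_def by (intro closed_Collect_eq cont1 continuous_on_const)
  have normQ: "norm Q \<le> sqrt (real CARD('n))" if "Q \<in> Og" for Q
  proof -
    have "(norm Q)^2 = Q \<bullet> Q" by (rule power2_norm_eq_inner)
    also have "\<dots> = (\<Sum>i\<in>UNIV. \<Sum>j\<in>UNIV. (Q$i$j)^2)"
      by (simp add: inner_vec_def power2_eq_square)
    also have "\<dots> = (\<Sum>j\<in>UNIV. \<Sum>i\<in>UNIV. (Q$i$j)^2)" by (rule sum.swap)
    also have "\<dots> = (\<Sum>j\<in>UNIV. (transpose Q ** Q)$j$j)"
      by (simp add: TQQ power2_eq_square)
    also have "\<dots> = (\<Sum>j\<in>(UNIV::'n set). 1)" using that by (simp add: Og_def mat_def)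
    finally have "(norm Q)^2 = real CARD('n)" by simp
    then show ?thesis by (metis norm_ge_zero real_sqrt_unique order_refl)
  qed
  have boundedOg: "bounded Og"
    unfolding bounded_iff using normQ by blast
  have compactOg: "compact Og" using closedOg boundedOg by (simp add: compact_eq_bounded_closed)
  have Deq: "D = (\<lambda>Q. \<Sum>k\<in>UNIV. (\<Sum>i\<in>UNIV. Q$i$k * (\<Sum>j\<in>UNIV. A$i$j * Q$j$k))^2)"
    by (simp add: D_def fun_eq_iff diag_entry inner_vec_def matrix_vector_mult_def)
  have contD: "continuous_on Og D" unfolding Deq by (intro continuous_intros)
  have "mat 1 \<in> Og" by (simp add: Og_def)
  then obtain Q0 where Q0: "Q0 \<in> Og" "\<And>Q. Q \<in> Og \<Longrightarrow> D Q \<le> D Q0"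
    using continuous_attains_sup[OF compactOg _ contD] by blast
  have oQ0: "orthogonal_matrix Q0" using Q0(1) by (simp add: Og_def orthogonal_matrix)
  define M where "M = transpose Q0 ** A ** Q0"
  have symM: "sym_mat M"
    using symA unfolding M_def sym_mat_def by (simp add: matrix_transpose_mul matrix_mul_assoc)
  have diagM: "M$i$j = 0" if ij: "i \<noteq> j" for i j
  proof (rule ccontr)
    assume "M$i$j \<noteq> 0"
    then obtain G where G: "orthogonal_matrix G"
      "(\<Sum>k\<in>UNIV. (M$k$k)^2) < (\<Sum>k\<in>UNIV. ((transpose G ** M ** G)$k$k)^2)"
      using givens[OF symM ij] by blast
    have "transpose (Q0 ** G) ** (Q0 ** G) = transpose G ** (transpose Q0 ** Q0) ** G"
      by (simp add: matrix_transpose_mul matrix_mul_assoc)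
    also have "\<dots> = mat 1" using G(1) oQ0 by (simp add: orthD)
    finally have "Q0 ** G \<in> Og" by (simp add: Og_def)
    moreover have "transpose (Q0 ** G) ** A ** (Q0 ** G) = transpose G ** M ** G"
      by (simp add: M_def matrix_transpose_mul matrix_mul_assoc)
    ultimately have "D Q0 < D (Q0 ** G)" using G(2) by (simp add: D_def M_def)
    with Q0(2)[OF \<open>Q0 ** G \<in> Og\<close>] show False by simp
  qed
  define l where "l = (\<chi> k. M$k$k)"
  have Ml: "M = dmat l" using diagM by (auto simp: vec_eq_iff dmat_def l_def)
  have "Q0 ** M ** transpose Q0 = (Q0 ** transpose Q0) ** A ** (Q0 ** transpose Q0)"
    by (simp add: M_def matrix_mul_assoc)
  also have "\<dots> = A" using oQ0 by (simp add: orthD)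
  finally show ?thesis using oQ0 Ml by metis
qed

lemma det_conj:
  fixes Q X :: "real^'n::finite^'n"
  assumes "orthogonal_matrix Q"
  shows "det (Q ** X ** transpose Q) = det X"
proof -
  have "det Q = 1 \<or> det Q = -1" using det_orthogonal_matrix[OF assms] .
  then show ?thesis by (auto simp: det_mul)
qed

lemma det_conj':
  fixes Q X :: "real^'n::finite^'n"
  assumes "orthogonal_matrix Q"
  shows "det (transpose Q ** X ** Q) = det X"
proof -
  have "det Q = 1 \<or> det Q = -1" using det_orthogonal_matrix[OF assms] .
  then show ?thesis by (auto simp: det_mul)
qed

lemma trace_conj:
  fixes Q X :: "real^'n::finite^'n"
  assumes "orthogonal_matrix Q"
  shows "trace (Q ** X ** transpose Q) = trace X"
proof -
  have "trace (Q ** X ** transpose Q) = trace (transpose Q ** (Q ** X))" by (rule trace_mul_sym)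
  also have "\<dots> = trace X" using assms by (simp add: matrix_mul_assoc orthD)
  finally show ?thesis .
qed

lemma trace_conj':
  fixes Q X :: "real^'n::finite^'n"
  assumes "orthogonal_matrix Q"
  shows "trace (transpose Q ** X ** Q) = trace X"
proof -
  have "trace (transpose Q ** X ** Q) = trace (Q ** (transpose Q ** X))" by (rule trace_mul_sym)
  also have "\<dots> = trace X" using assms by (simp add: matrix_mul_assoc orthD)
  finally show ?thesis .
qed

lemma det_dmat: "det (dmat l) = (\<Prod>i\<in>UNIV. l$i)"
  by (subst det_diagonal) (auto simp: dmat_def)

lemma trace_dmat: "trace (dmat l) = (\<Sum>i\<in>UNIV. l$i)"
  by (simp add: trace_def dmat_def)

lemma transpose_dmat[simp]: "transpose (dmat l) = dmat l"
  by (simp add: transpose_def dmat_def vec_eq_iff)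

lemma quad_dmat: "x \<bullet> (dmat l *v x) = (\<Sum>i\<in>UNIV. l$i * (x$i)^2)"
  by (simp add: dmat_mulv inner_vec_def power2_eq_square mult_ac)

lemma dmat_mul: "dmat a ** dmat b = dmat (\<chi> k. a$k * b$k)"
proof -
  have "(\<Sum>k\<in>UNIV. (if i = k then a$i else 0) * (if k = j then b$k else 0)) = (if i = j then a$i * b$i else 0)" for i j
  proof -
    have "(\<Sum>k\<in>UNIV. (if i = k then a$i else 0) * (if k = j then b$k else 0))
        = (\<Sum>k\<in>UNIV. if k = i then (if k = j then a$i * b$k else 0) else 0)"
      by (rule sum.cong) auto
    then show ?thesis by simp
  qed
  then show ?thesis by (simp add: matrix_matrix_mult_def dmat_def vec_eq_iff)
qed

lemma sym_conj:
  fixes Q X :: "real^'n::finite^'n"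
  assumes "sym_mat X" shows "sym_mat (Q ** X ** transpose Q)" "sym_mat (transpose Q ** X ** Q)"
  using assms unfolding sym_mat_def by (simp_all add: matrix_transpose_mul matrix_mul_assoc)

lemma psd_conjI:
  fixes Q X :: "real^'n::finite^'n"
  assumes "psd_mat X" shows "psd_mat (transpose Q ** X ** Q)"
  using assms sym_conj(2)[of X Q] unfolding psd_mat_def by (simp add: quad_conj)

lemma psd_dmat: "(\<forall>k. 0 \<le> l$k) \<Longrightarrow> psd_mat (dmat l)"
  unfolding psd_mat_def sym_mat_def by (simp add: quad_dmat sum_nonneg)

lemma psd_dmat_conj:
  fixes Q :: "real^'n::finite^'n"
  assumes "(\<forall>k. 0 \<le> l$k)" shows "psd_mat (Q ** dmat l ** transpose Q)"
  using psd_conjI[OF psd_dmat[OF assms], of "transpose Q"] by simp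

lemma axis_quad: "axis k 1 \<bullet> (B *v axis k 1) = B$k$k"
  by (simp add: matrix_vector_mult_basis inner_axis')

lemma psd_diag: "psd_mat B \<Longrightarrow> 0 \<le> B$k$k"
  unfolding psd_mat_def using axis_quad[of k B] by metis

lemma psd_spec:
  assumes "psd_mat B"
  shows "\<exists>Q l. orthogonal_matrix Q \<and> B = Q ** dmat l ** transpose Q \<and> (\<forall>k. 0 \<le> l$k)"
proof -
  obtain Q l where Q: "orthogonal_matrix Q" "B = Q ** dmat l ** transpose Q"
    using spectral assms psd_mat_def by blast
  have "transpose Q ** B ** Q = (transpose Q ** Q) ** dmat l ** (transpose Q ** Q)"
    using Q by (simp add: matrix_mul_assoc)
  also have "\<dots> = dmat l" using Q by (simp add: orthD)
  finally have "transpose Q ** B ** Q = dmat l" .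
  then have "psd_mat (dmat l)" using psd_conjI[OF assms, of Q] by simp
  then have "0 \<le> l$k" for k using psd_diag[of "dmat l" k] by (simp add: dmat_def)
  then show ?thesis using Q by blast
qed

lemma amgm_mat:
  fixes B :: "'n::finite mat"
  assumes "psd_mat B"
  shows "0 \<le> det B \<and> real CARD('n) * root CARD('n) (det B) \<le> trace B"
proof -
  obtain Q l where Q: "orthogonal_matrix Q" "B = Q ** dmat l ** transpose Q" "\<forall>k. 0 \<le> l$k"
    using psd_spec[OF assms] by blast
  have dB: "det B = (\<Prod>i\<in>UNIV. l$i)" using Q by (simp add: det_conj det_dmat)
  have tB: "trace B = (\<Sum>i\<in>UNIV. l$i)" using Q by (simp add: trace_conj trace_dmat)
  have p0: "0 \<le> (\<Prod>i\<in>UNIV. l$i)" using Q(3) by (simp add: prod_nonneg)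
  have am: "(\<Sum>i\<in>UNIV. l$i / card (UNIV::'n set)) \<ge> (\<Prod>i\<in>UNIV. l$i) powr (1 / card (UNIV::'n set))"
    by (rule arith_geom_mean) (use Q(3) in auto)
  have "root CARD('n) (\<Prod>i\<in>UNIV. l$i) = (\<Prod>i\<in>UNIV. l$i) powr (1 / CARD('n))"
    using p0 by (simp add: root_powr_inverse)
  also have "\<dots> \<le> (\<Sum>i\<in>UNIV. l$i) / CARD('n)" using am by (simp add: sum_divide_distrib)
  finally have "real CARD('n) * root CARD('n) (\<Prod>i\<in>UNIV. l$i) \<le> (\<Sum>i\<in>UNIV. l$i)"
    by (simp add: field_simps)
  then show ?thesis using dB tB p0 by simp
qed

lemma outer_mulv: "outer v *v x = (v \<bullet> x) *\<^sub>R v"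
proof -
  have "(\<Sum>j\<in>UNIV. v$i * v$j * x$j) = (v \<bullet> x) * v$i" for i
  proof -
    have "(\<Sum>j\<in>UNIV. v$i * v$j * x$j) = v$i * (\<Sum>j\<in>UNIV. v$j * x$j)"
      by (simp add: sum_distrib_left mult.assoc)
    then show ?thesis by (simp add: inner_vec_def mult.commute)
  qed
  then show ?thesis by (simp add: outer_def matrix_vector_mult_def vec_eq_iff)
qed

lemma outer_quad: "x \<bullet> (outer v *v x) = (v \<bullet> x)^2"
  by (simp add: outer_mulv inner_commute power2_eq_square)

lemma transpose_outer[simp]: "transpose (outer v) = outer v"
  by (simp add: outer_def transpose_def vec_eq_iff mult.commute)

lemma trace_outer: "trace (outer v) = v \<bullet> v"
  by (simp add: trace_def outer_def inner_vec_def)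

lemma outer_S1: "norm v = 1 \<Longrightarrow> outer v \<in> S1"
  unfolding S1_def psd_mat_def sym_mat_def
  by (simp add: outer_quad trace_outer norm_eq_1[symmetric])

lemma det_outer:
  fixes v :: "real^'n::finite"
  assumes "2 \<le> CARD('n)"
  shows "det (outer v) = 0"
proof -
  obtain k :: 'n where True by blast
  obtain j :: 'n where jk: "j \<noteq> k"
  proof (rule ccontr)
    assume "\<not> thesis"
    then have "\<forall>j::'n. j = k" using that by blast
    then have "(UNIV::'n set) = {k}" by auto
    then have "card (UNIV::'n set) = card {k}" by (rule arg_cong)
    then have "card (UNIV::'n set) = 1" by simp
    then show False using assms by simp
  qed
  define V :: "real^'n^'n" where "V = (\<chi> i m. if m = k then v$i else 0)"
  define W :: "real^'n^'n" where "W = (\<chi> m j. if m = k then v$j else 0)"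
  have "(\<Sum>m\<in>UNIV. (if m = k then v$i else 0) * (if m = k then v$j else 0)) = v$i * v$j" for i j
  proof -
    have "(\<Sum>m\<in>UNIV. (if m = k then v$i else 0) * (if m = k then v$j else 0))
       = (\<Sum>m\<in>UNIV. if m = k then v$i * v$j else 0)" by (rule sum.cong) auto
    then show ?thesis by simp
  qed
  then have "V ** W = outer v" by (simp add: V_def W_def outer_def matrix_matrix_mult_def vec_eq_iff)
  moreover have "det V = 0"
    by (rule det_zero_column(1)[of j]) (use jk in \<open>simp add: V_def column_def vec_eq_iff\<close>)
  ultimately show ?thesis by (metis det_mul mult_zero_left)
qed

lemma frob_outer: "frob (outer v) A = v \<bullet> (A *v v)"
proof -
  have "frob (outer v) A = trace (A ** outer v)" unfolding frob_def transpose_outer by (rule trace_mul_sym)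
  also have "\<dots> = (\<Sum>i\<in>UNIV. \<Sum>j\<in>UNIV. A$i$j * (v$j * v$i))"
    by (simp add: trace_def matrix_matrix_mult_def outer_def)
  also have "\<dots> = (\<Sum>i\<in>UNIV. \<Sum>j\<in>UNIV. v$i * (A$i$j * v$j))"
    by (intro sum.cong refl) (simp add: mult_ac)
  also have "\<dots> = (\<Sum>i\<in>UNIV. v$i * (\<Sum>j\<in>UNIV. A$i$j * v$j))"
    by (simp add: sum_distrib_left)
  also have "\<dots> = v \<bullet> (A *v v)"
    by (simp add: inner_vec_def matrix_vector_mult_def)
  finally show ?thesis .
qed

lemma frob_sym: "sym_mat B \<Longrightarrow> frob B A = trace (B ** A)"
  by (simp add: frob_def sym_mat_def)

lemma trace_mul_dmat: "trace (C ** dmat l) = (\<Sum>k\<in>UNIV. C$k$k * l$k)"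
proof -
  have "(\<Sum>j\<in>UNIV. C$k$j * (if j = k then l$j else 0)) = C$k$k * l$k" for k
  proof -
    have "(\<Sum>j\<in>UNIV. C$k$j * (if j = k then l$j else 0)) = (\<Sum>j\<in>UNIV. if j = k then C$k$j * l$j else 0)"
      by (rule sum.cong) auto
    then show ?thesis by simp
  qed
  then show ?thesis by (simp add: trace_def matrix_matrix_mult_def dmat_def)
qed

lemma S1D: "B \<in> S1 \<Longrightarrow> psd_mat B \<and> sym_mat B \<and> trace B = 1"
  by (simp add: S1_def psd_mat_def)

lemma super_ineq:
  fixes A :: "'n::finite mat"
  assumes psdA: "psd_mat A" and dA: "det A > 0"
  obtains m where "m > 0" "\<forall>B\<in>S1. m \<le> frob B A \<and>
     real CARD('n) * root CARD('n) (det A) * root CARD('n) (det B) \<le> frob B A"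
proof -
  obtain Q l where Q: "orthogonal_matrix Q" "A = Q ** dmat l ** transpose Q" "\<forall>k. 0 \<le> l$k"
    using psd_spec[OF psdA] by blast
  have detA: "det A = (\<Prod>k\<in>UNIV. l$k)" using Q by (simp add: det_conj det_dmat)
  have lpos: "0 < l$k" for k
  proof -
    have "(\<Prod>k\<in>UNIV. l$k) \<noteq> 0" using dA detA by linarith
    moreover have "(\<Prod>k\<in>UNIV. l$k) = 0 \<longleftrightarrow> (\<exists>a\<in>UNIV. l$a = 0)"
      by (rule prod_zero_iff) simp
    ultimately have "l$k \<noteq> 0" by blast
    then show ?thesis using Q(3) by (simp add: order_less_le)
  qed
  define m where "m = Min (range (\<lambda>k. l$k))"
  have mpos: "m > 0" unfolding m_def by (subst Min_gr_iff) (auto simp: lpos)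
  have ml: "m \<le> l$k" for k unfolding m_def by (rule Min_le) auto
  have main: "m \<le> frob B A \<and> real CARD('n) * root CARD('n) (det A) * root CARD('n) (det B) \<le> frob B A"
    if B: "B \<in> S1" for B
  proof -
    have psdB: "psd_mat B" and symB: "sym_mat B" and tB: "trace B = 1" using S1D[OF B] by auto
    define C where "C = transpose Q ** B ** Q"
    have psdC: "psd_mat C" unfolding C_def by (rule psd_conjI[OF psdB])
    have tC: "trace C = 1" unfolding C_def using Q(1) tB by (simp add: trace_conj')
    have dC: "det C = det B" unfolding C_def using Q(1) by (simp add: det_conj')
    have Ckk: "0 \<le> C$k$k" for k using psd_diag[OF psdC] .
    have "frob B A = trace (B ** (Q ** dmat l ** transpose Q))" using symB Q(2) by (simp add: frob_sym)
    also have "\<dots> = trace ((B ** Q ** dmat l) ** transpose Q)" by (simp add: matrix_mul_assoc)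
    also have "\<dots> = trace (transpose Q ** (B ** Q ** dmat l))" by (rule trace_mul_sym)
    also have "\<dots> = trace (C ** dmat l)" by (simp add: C_def matrix_mul_assoc)
    also have "\<dots> = (\<Sum>k\<in>UNIV. C$k$k * l$k)" by (rule trace_mul_dmat)
    finally have fr: "frob B A = (\<Sum>k\<in>UNIV. C$k$k * l$k)" .
    have "m = (\<Sum>k\<in>UNIV. C$k$k * m)" using tC by (simp add: trace_def sum_distrib_right[symmetric])
    also have "\<dots> \<le> (\<Sum>k\<in>UNIV. C$k$k * l$k)"
      by (rule sum_mono) (simp add: Ckk ml mult_left_mono)
    finally have m1: "m \<le> frob B A" using fr by simp
    define s where "s = (\<chi> k. sqrt (l$k))"
    define E where "E = transpose (dmat s) ** C ** dmat s"
    have psdE: "psd_mat E" unfolding E_def by (rule psd_conjI[OF psdC])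
    have colS: "column k (dmat s) = s$k *\<^sub>R axis k 1" for k
      by (simp add: column_def dmat_def vec_eq_iff axis_def)
    have sk: "s$k * s$k = l$k" for k using Q(3) by (simp add: s_def)
    have Ekk: "E$k$k = C$k$k * l$k" for k
    proof -
      have "E$k$k = s$k * (s$k * C$k$k)"
        unfolding E_def diag_entry colS by (simp add: matrix_vector_mult_scaleR axis_quad)
      also have "\<dots> = C$k$k * (s$k * s$k)" by (simp add: ac_simps)
      finally show ?thesis by (simp add: sk)
    qed
    have tE: "trace E = frob B A" using fr by (simp add: trace_def Ekk)
    have "det E = (\<Prod>k\<in>UNIV. s$k) * det C * (\<Prod>k\<in>UNIV. s$k)"
      by (simp add: E_def det_mul det_dmat)
    also have "\<dots> = (\<Prod>k\<in>UNIV. s$k * s$k) * det B" by (simp add: dC prod.distrib)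
    also have "\<dots> = det A * det B" by (simp add: detA sk)
    finally have dE: "det E = det A * det B" .
    have "real CARD('n) * root CARD('n) (det E) \<le> trace E" using amgm_mat[OF psdE] by simp
    then have m2: "real CARD('n) * root CARD('n) (det A) * root CARD('n) (det B) \<le> frob B A"
      using tE dE by (simp add: real_root_mult mult.assoc)
    show ?thesis using m1 m2 by simp
  qed
  show ?thesis using that mpos main by blast
qed

lemma sub_ineq:
  fixes A :: "'n::finite mat"
  assumes psdA: "psd_mat A" and f0: "0 \<le> f"
    and H: "\<forall>B\<in>S1. f * root CARD('n) (det B) \<le> frob B A"
  shows "(f / real CARD('n))^CARD('n) \<le> det A"
proof -
  obtain Q l where Q: "orthogonal_matrix Q" "A = Q ** dmat l ** transpose Q" "\<forall>k. 0 \<le> l$k"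
    using psd_spec[OF psdA] by blast
  define d where "d = CARD('n)"
  have d0: "0 < d" unfolding d_def by simp
  have detA: "det A = (\<Prod>k\<in>UNIV. l$k)" using Q by (simp add: det_conj det_dmat)
  have key: "(f/d)^d \<le> (\<Prod>k\<in>UNIV. l$k + e)" if e: "e > 0" for e
  proof -
    have lpos: "0 < l$k + e" for k using Q(3) e by (simp add: add_nonneg_pos)
    define S where "S = (\<Sum>k\<in>UNIV. 1 / (l$k + e))"
    have Spos: "0 < S" unfolding S_def by (rule sum_pos) (auto simp: lpos)
    define \<beta> where "\<beta> = (\<chi> k. 1 / ((l$k + e) * S))"
    have b0: "\<forall>k. 0 \<le> \<beta>$k" using lpos Spos by (simp add: \<beta>_def less_imp_le)
    define B where "B = Q ** dmat \<beta> ** transpose Q"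
    have psdB: "psd_mat B" unfolding B_def by (rule psd_dmat_conj[OF b0])
    have "trace B = (\<Sum>k\<in>UNIV. \<beta>$k)" unfolding B_def using Q(1) by (simp add: trace_conj trace_dmat)
    also have "\<dots> = (\<Sum>k\<in>UNIV. 1 / (l$k + e)) / S"
      by (simp add: \<beta>_def sum_divide_distrib)
    also have "\<dots> = 1" using Spos by (simp add: S_def)
    finally have tB: "trace B = 1" .
    have BS1: "B \<in> S1" using psdB tB by (simp add: S1_def)
    have "frob B A = trace (B ** A)" using psdB by (simp add: frob_sym psd_mat_def)
    also have "B ** A = Q ** (dmat \<beta> ** (transpose Q ** Q) ** dmat l) ** transpose Q"
      unfolding B_def Q(2) by (simp add: matrix_mul_assoc)
    also have "\<dots> = Q ** dmat (\<chi> k. \<beta>$k * l$k) ** transpose Q" using Q(1) by (simp add: orthD dmat_mul)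
    finally have "frob B A = (\<Sum>k\<in>UNIV. \<beta>$k * l$k)" using Q(1) by (simp add: trace_conj trace_dmat)
    also have "\<dots> \<le> (\<Sum>k\<in>UNIV. \<beta>$k * (l$k + e))"
      by (rule sum_mono) (use b0 e in \<open>simp add: mult_left_mono\<close>)
    also have "\<dots> = (\<Sum>k\<in>(UNIV::'n set). 1 / S)"
    proof (rule sum.cong)
      fix k :: 'n
      show "\<beta>$k * (l$k + e) = 1 / S" using lpos[of k] by (simp add: \<beta>_def)
    qed simp
    also have "\<dots> = d / S" by (simp add: d_def)
    finally have fr: "frob B A \<le> d / S" .
    define P where "P = (\<Prod>k\<in>UNIV. l$k + e)"
    have Ppos: "0 < P" unfolding P_def by (rule prod_pos) (simp add: lpos)
    have "det B = (\<Prod>k\<in>UNIV. \<beta>$k)" unfolding B_def using Q(1) by (simp add: det_conj det_dmat)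
    also have "\<dots> = (\<Prod>k\<in>UNIV. 1 / (l$k + e) * (1 / S))"
      by (rule prod.cong) (simp_all add: \<beta>_def)
    also have "\<dots> = (\<Prod>k\<in>UNIV. 1 / (l$k + e)) * (\<Prod>k\<in>(UNIV::'n set). 1 / S)"
      by (rule prod.distrib)
    also have "\<dots> = 1 / (P * S^d)"
      by (simp add: P_def d_def prod_dividef power_one_over)
    finally have dB: "det B = 1 / (P * S^d)" .
    have "root d (det B) = 1 / (root d P * S)"
      using d0 Spos by (simp add: dB real_root_divide real_root_mult real_root_power_cancel)
    then have "f * (1 / (root d P * S)) \<le> d / S" using H BS1 fr d_def by fastforce
    moreover have rP: "0 < root d P" using Ppos d0 by simp
    ultimately have "f \<le> d * root d P" using Spos by (simp add: field_simps)
    then have "f / d \<le> root d P" using d0 by (simp add: field_simps)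
    then have "(f/d)^d \<le> (root d P)^d" by (rule power_mono) (use f0 in simp)
    also have "\<dots> = P" using d0 Ppos by simp
    finally show ?thesis unfolding P_def .
  qed
  have lim: "((\<lambda>e. \<Prod>k\<in>UNIV. l$k + e) \<longlongrightarrow> (\<Prod>k\<in>UNIV. l$k + 0)) (at_right (0::real))"
    by (intro tendsto_intros)
  have "(f/d)^d \<le> (\<Prod>k\<in>UNIV. l$k + 0)"
  proof (rule tendsto_le[OF _ lim tendsto_const])
    show "at_right (0::real) \<noteq> bot" by simp
    show "\<forall>\<^sub>F e in at_right 0. (f/d)^d \<le> (\<Prod>k\<in>UNIV. l$k + e)"
      using key eventually_at_right_less[of "0::real"] by (auto elim: eventually_mono)
  qed
  then show ?thesis using detA by (simp add: d_def)
qed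

lemma S1_entry:
  assumes B: "B \<in> S1" shows "\<bar>B$i$j\<bar> \<le> 1"
proof -
  have psdB: "psd_mat B" and symB: "sym_mat B" and tB: "trace B = 1" using S1D[OF B] by auto
  have dg: "0 \<le> B$k$k" for k using psd_diag[OF psdB] .
  show ?thesis
  proof (cases "i = j")
    case True
    have "B$i$i \<le> (\<Sum>k\<in>UNIV. B$k$k)" by (rule member_le_sum) (auto simp: dg)
    then show ?thesis using tB dg[of i] True by (simp add: trace_def)
  next
    case False
    have "(\<Sum>k\<in>{i,j}. B$k$k) \<le> (\<Sum>k\<in>UNIV. B$k$k)" by (rule sum_mono2) (auto simp: dg)
    then have s: "B$i$i + B$j$j \<le> 1" using False tB by (simp add: trace_def)
    have ji: "B$j$i = B$i$j" using sym_entry[OF symB] .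
    have q: "(axis i 1 + c *\<^sub>R axis j 1) \<bullet> (B *v (axis i 1 + c *\<^sub>R axis j 1))
            = B$i$i + c * B$j$i + c * (B$i$j + c * B$j$j)" for c :: real
      using False by (simp add: matrix_vector_right_distrib matrix_vector_mult_scaleR matrix_vector_mult_basis
          inner_add_left inner_add_right inner_axis')
    have "0 \<le> B$i$i + 1 * B$j$i + 1 * (B$i$j + 1 * B$j$j)"
      using psdB q[of 1] unfolding psd_mat_def by metis
    moreover have "0 \<le> B$i$i + (-1) * B$j$i + (-1) * (B$i$j + (-1) * B$j$j)"
      using psdB q[of "-1"] unfolding psd_mat_def by metis
    ultimately show ?thesis using s ji dg[of i] dg[of j] by (simp add: abs_le_iff)
  qed
qed

lemma frob_bound:
  fixes A :: "'n::finite mat"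
  assumes B: "B \<in> S1" shows "\<bar>frob B A\<bar> \<le> (\<Sum>i\<in>UNIV. \<Sum>k\<in>UNIV. \<bar>A$k$i\<bar>)"
proof -
  have "frob B A = (\<Sum>i\<in>UNIV. \<Sum>k\<in>UNIV. B$k$i * A$k$i)"
    by (simp add: frob_def trace_def matrix_matrix_mult_def transpose_def)
  also have "\<bar>\<dots>\<bar> \<le> (\<Sum>i\<in>UNIV. \<bar>\<Sum>k\<in>UNIV. B$k$i * A$k$i\<bar>)" by (rule sum_abs)
  also have "\<dots> \<le> (\<Sum>i\<in>UNIV. \<Sum>k\<in>UNIV. \<bar>A$k$i\<bar>)"
  proof (rule sum_mono)
    fix i
    have "\<bar>\<Sum>k\<in>UNIV. B$k$i * A$k$i\<bar> \<le> (\<Sum>k\<in>UNIV. \<bar>B$k$i * A$k$i\<bar>)" by (rule sum_abs)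
    also have "\<dots> \<le> (\<Sum>k\<in>UNIV. \<bar>A$k$i\<bar>)"
    proof (rule sum_mono)
      fix k
      have "\<bar>B$k$i\<bar> \<le> 1" by (rule S1_entry[OF B])
      then show "\<bar>B$k$i * A$k$i\<bar> \<le> \<bar>A$k$i\<bar>"
        by (simp add: abs_mult mult_left_le_one_le)
    qed
    finally show "\<bar>\<Sum>k\<in>UNIV. B$k$i * A$k$i\<bar> \<le> (\<Sum>k\<in>UNIV. \<bar>A$k$i\<bar>)" .
  qed
  finally show ?thesis .
qed

lemma root_det_le1:
  fixes B :: "'n::finite mat"
  assumes B: "B \<in> S1" shows "0 \<le> root CARD('n) (det B) \<and> root CARD('n) (det B) \<le> 1"
proof -
  have "0 \<le> det B \<and> real CARD('n) * root CARD('n) (det B) \<le> 1"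
    using amgm_mat[of B] S1D[OF B] by simp
  moreover have "1 \<le> real CARD('n)" by simp
  moreover have r0: "0 \<le> root CARD('n) (det B)" using calculation(1) by simp
  ultimately have "1 * root CARD('n) (det B) \<le> real CARD('n) * root CARD('n) (det B)"
    by (intro mult_right_mono) auto
  then show ?thesis using r0 \<open>0 \<le> det B \<and> real CARD('n) * root CARD('n) (det B) \<le> 1\<close> by linarith
qed

lemma S1_ne: "(S1 :: 'n::finite mat set) \<noteq> {}"
  using outer_S1[of "axis undefined 1 :: real^'n"] by auto

lemma bellman_bdd:
  fixes A :: "'n::finite mat"
  assumes f0: "0 \<le> f"
  shows "bdd_above ((\<lambda>B. - frob B A + f * root CARD('n) (det B)) ` S1)"
proof (rule bdd_aboveI2)
  fix B :: "'n mat" assume B: "B \<in> S1"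
  have "- frob B A \<le> (\<Sum>i\<in>UNIV. \<Sum>k\<in>UNIV. \<bar>A$k$i\<bar>)" using frob_bound[OF B, of A] by linarith
  moreover have "f * root CARD('n) (det B) \<le> f" using root_det_le1[OF B] f0
    by (simp add: mult_left_le)
  ultimately show "- frob B A + f * root CARD('n) (det B) \<le> (\<Sum>i\<in>UNIV. \<Sum>k\<in>UNIV. \<bar>A$k$i\<bar>) + f"
    by linarith
qed

lemma bellman_upper:
  fixes A :: "'n::finite mat"
  assumes "0 \<le> f" "B \<in> S1"
  shows "- frob B A + f * root CARD('n) (det B) \<le> bellmanH A f"
  unfolding bellmanH_def by (rule cSUP_upper[OF assms(2) bellman_bdd[OF assms(1)]])

lemma bellman_approx:
  fixes A :: "'n::finite mat"
  assumes "0 \<le> f" "0 \<le> bellmanH A f" "\<delta> > 0"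
  shows "\<exists>B\<in>S1. - \<delta> < - frob B A + f * root CARD('n) (det B)"
proof -
  have "- \<delta> < bellmanH A f" using assms by simp
  then show ?thesis unfolding bellmanH_def
    using less_cSUP_iff[OF S1_ne bellman_bdd[OF assms(1)]] by blast
qed

lemma line_deriv:
  fixes \<phi> :: "real^'n::finite \<Rightarrow> real"
  assumes "(\<phi> has_derivative (\<lambda>h. g \<bullet> h)) (at (p + s *\<^sub>R u))"
  shows "((\<lambda>s. \<phi> (p + s *\<^sub>R u)) has_real_derivative (g \<bullet> u)) (at s)"
proof -
  have "((\<lambda>s. p + s *\<^sub>R u) has_derivative (\<lambda>h. h *\<^sub>R u)) (at s)"
    by (intro derivative_eq_intros) auto
  from has_derivative_compose[OF this assms]
  have "((\<lambda>s. \<phi> (p + s *\<^sub>R u)) has_derivative (\<lambda>h. g \<bullet> (h *\<^sub>R u))) (at s)" .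
  moreover have "(\<lambda>h. g \<bullet> (h *\<^sub>R u)) = (*) (g \<bullet> u)" by (auto simp: fun_eq_iff)
  ultimately show ?thesis unfolding has_field_derivative_def by simp
qed

lemma convex_first_order:
  fixes \<phi> :: "real^'n::finite \<Rightarrow> real"
  assumes cvx: "convex_on G \<phi>" and z: "z \<in> G" and y: "y \<in> G"
    and d: "(\<phi> has_derivative (\<lambda>h. g \<bullet> h)) (at z)"
  shows "\<phi> z + g \<bullet> (y - z) \<le> \<phi> y"
proof (rule ccontr)
  assume "\<not> ?thesis"
  then have lt: "0 < g \<bullet> (y - z) - (\<phi> y - \<phi> z)" by simp
  define k where "k s = \<phi> (z + s *\<^sub>R (y - z)) - s * (\<phi> y - \<phi> z)" for s
  have "((\<lambda>s. \<phi> (z + s *\<^sub>R (y - z))) has_real_derivative (g \<bullet> (y - z))) (at 0)"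
    by (rule line_deriv) (use d in simp)
  then have "(k has_real_derivative (g \<bullet> (y - z) - (\<phi> y - \<phi> z))) (at 0)"
    unfolding k_def by (intro derivative_eq_intros) auto
  from DERIV_pos_inc_right[OF this lt] obtain dd where dd: "dd > 0" "\<forall>h>0. h < dd \<longrightarrow> k 0 < k (0 + h)"
    by blast
  define s where "s = min (dd/2) 1"
  have s: "0 < s" "s < dd" "s \<le> 1" using dd by (auto simp: s_def)
  have "k 0 < k s" using dd(2) s by auto
  then have "\<phi> z < \<phi> (z + s *\<^sub>R (y - z)) - s * (\<phi> y - \<phi> z)" by (simp add: k_def)
  moreover have "\<phi> ((1 - s) *\<^sub>R z + s *\<^sub>R y) \<le> (1 - s) * \<phi> z + s * \<phi> y"
    using cvx z y s unfolding convex_on_def by auto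
  moreover have "(1 - s) *\<^sub>R z + s *\<^sub>R y = z + s *\<^sub>R (y - z)" by (simp add: algebra_simps)
  ultimately show False by (simp add: algebra_simps)
qed

lemma convex_psd:
  fixes \<phi> :: "real^'n::finite \<Rightarrow> real"
  assumes C2: "C2_on G \<phi> D\<phi> D2\<phi>" and G: "open G" and cvx: "convex_on G \<phi>" and x: "x \<in> G"
  shows "0 \<le> v \<bullet> (D2\<phi> x *v v)"
proof (rule ccontr)
  assume "\<not> ?thesis"
  then have neg: "(D2\<phi> x *v v) \<bullet> v < 0" by (simp add: inner_commute)
  have dphi: "\<And>y. y \<in> G \<Longrightarrow> (\<phi> has_derivative (\<lambda>h. D\<phi> y \<bullet> h)) (at y)"
   and dD: "(D\<phi> has_derivative (\<lambda>h. D2\<phi> x *v h)) (at x)" using C2 x unfolding C2_on_def by auto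
  define g where "g t = D\<phi> (x + t *\<^sub>R v) \<bullet> v" for t
  have "((\<lambda>t. x + t *\<^sub>R v) has_derivative (\<lambda>h. h *\<^sub>R v)) (at 0)"
    by (intro derivative_eq_intros) auto
  from has_derivative_compose[OF this] dD
  have "((\<lambda>t. D\<phi> (x + t *\<^sub>R v)) has_derivative (\<lambda>h. D2\<phi> x *v (h *\<^sub>R v))) (at 0)" by simp
  then have "(g has_derivative (\<lambda>h. (D2\<phi> x *v (h *\<^sub>R v)) \<bullet> v)) (at 0)"
    unfolding g_def by (intro derivative_eq_intros) auto
  moreover have "(\<lambda>h. (D2\<phi> x *v (h *\<^sub>R v)) \<bullet> v) = (*) ((D2\<phi> x *v v) \<bullet> v)"
    by (auto simp: fun_eq_iff matrix_vector_mult_scaleR)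
  ultimately have "(g has_real_derivative ((D2\<phi> x *v v) \<bullet> v)) (at 0)"
    unfolding has_field_derivative_def by simp
  from DERIV_neg_dec_right[OF this neg] obtain dd where dd: "dd > 0" "\<forall>h>0. h < dd \<longrightarrow> g (0 + h) < g 0"
    by blast
  obtain r where r: "r > 0" "ball x r \<subseteq> G" using G x open_contains_ball by blast
  define t where "t = min (dd/2) (r / (2 * (norm v + 1)))"
  have rpos': "0 < r / (2 * (norm v + 1))" using r by (intro divide_pos_pos) (auto simp: add_nonneg_pos)
  then have t: "0 < t" "t < dd" using dd by (auto simp: t_def)
  have "norm (t *\<^sub>R v) < r"
  proof -
    have "norm (t *\<^sub>R v) = t * norm v" using t by simp
    also have "\<dots> \<le> r / (2 * (norm v + 1)) * norm v" by (rule mult_right_mono) (auto simp: t_def)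
    also have "\<dots> < r / (2 * (norm v + 1)) * (2 * (norm v + 1))"
      using rpos' norm_ge_zero[of v] by (intro mult_strict_left_mono) (simp_all add: algebra_simps add_nonneg_pos)
    also have "\<dots> = r"
    proof -
      have nz: "2 * (norm v + 1) \<noteq> 0" using norm_ge_zero[of v] by (smt (verit))
      show ?thesis using nz by (simp add: field_simps del: mult_2)
    qed
    finally show ?thesis .
  qed
  then have xt: "x + t *\<^sub>R v \<in> G" using r by (auto simp: dist_norm)
  have "g t < g 0" using dd(2) t by auto
  have c1: "\<phi> x + D\<phi> x \<bullet> ((x + t *\<^sub>R v) - x) \<le> \<phi> (x + t *\<^sub>R v)"
    by (rule convex_first_order[OF cvx x xt dphi[OF x]])
  have c2: "\<phi> (x + t *\<^sub>R v) + D\<phi> (x + t *\<^sub>R v) \<bullet> (x - (x + t *\<^sub>R v)) \<le> \<phi> x"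
    by (rule convex_first_order[OF cvx xt x dphi[OF xt]])
  from c1 c2 have "t * g 0 \<le> t * g t" by (simp add: g_def algebra_simps)
  then have "g 0 \<le> g t" using t by simp
  with \<open>g t < g 0\<close> show False by simp
qed

lemma usc_max:
  fixes g :: "'a::metric_space \<Rightarrow> real"
  assumes K: "compact K" "K \<noteq> {}"
    and usc: "\<And>x t. x \<in> K \<Longrightarrow> g x < t \<Longrightarrow> \<exists>e>0. \<forall>y\<in>K. dist y x < e \<longrightarrow> g y < t"
  shows "\<exists>x\<in>K. \<forall>y\<in>K. g y \<le> g x"
proof (rule ccontr)
  assume "\<not> ?thesis"
  then have "\<forall>x\<in>K. \<exists>y\<in>K. g x < g y" by (auto simp: not_le)
  then obtain nx where nx: "\<And>x. x \<in> K \<Longrightarrow> nx x \<in> K \<and> g x < g (nx x)" by metis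
  have "\<forall>x\<in>K. \<exists>e>0. \<forall>y\<in>K. dist y x < e \<longrightarrow> g y < g (nx x)"
    using usc nx by blast
  then obtain ee where ee: "\<And>x. x \<in> K \<Longrightarrow> ee x > 0 \<and> (\<forall>y\<in>K. dist y x < ee x \<longrightarrow> g y < g (nx x))"
    by metis
  have cov: "K \<subseteq> (\<Union>x\<in>K. ball x (ee x))" using ee by force
  obtain D where D: "D \<subseteq> K" "finite D" "K \<subseteq> (\<Union>x\<in>D. ball x (ee x))"
    by (rule compactE_image[OF K(1) _ cov]) auto
  have "D \<noteq> {}" using D(3) K(2) by auto
  define m where "m = Max ((\<lambda>x. g (nx x)) ` D)"
  have "m \<in> (\<lambda>x. g (nx x)) ` D" unfolding m_def using D(2) \<open>D \<noteq> {}\<close> by (intro Max_in) auto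
  then obtain x0 where x0: "x0 \<in> D" "m = g (nx x0)" by auto
  have mge: "g (nx x) \<le> m" if "x \<in> D" for x unfolding m_def using D(2) that by (intro Max_ge) auto
  have "nx x0 \<in> K" using nx x0(1) D(1) by blast
  then obtain x1 where x1: "x1 \<in> D" "nx x0 \<in> ball x1 (ee x1)" using D(3) by blast
  then have "g (nx x0) < g (nx x1)" using ee[of x1] D(1) \<open>nx x0 \<in> K\<close> by (auto simp: dist_commute)
  with mge[OF x1(1)] x0 show False by simp
qed

lemma quad_C2:
  fixes S :: "'n::finite mat"
  assumes symS: "sym_mat S"
  shows "C2_on G (\<lambda>y. \<alpha> + w \<bullet> (y - a) + (1/2) * ((y - a) \<bullet> (S *v (y - a))))
                 (\<lambda>y. w + S *v (y - a)) (\<lambda>y. S)"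
proof -
  have tr: "p \<bullet> (S *v h) = (S *v p) \<bullet> h" for p h
  proof -
    have "p \<bullet> (S *v h) = (p v* S) \<bullet> h" by (simp add: dot_lmul_matrix)
    also have "p v* S = transpose S *v p" by (simp add: transpose_matrix_vector)
    also have "transpose S = S" using symS by (simp add: sym_mat_def)
    finally show ?thesis .
  qed
  have dS: "((\<lambda>y. S *v (y - a)) has_derivative (\<lambda>h. S *v h)) (at y)" for y
  proof -
    have "((\<lambda>y. y - a) has_derivative (\<lambda>h. h)) (at y)" by (intro derivative_eq_intros) auto
    from bounded_linear.has_derivative[OF matrix_vector_mul_bounded_linear[of S] this]
    show ?thesis .
  qed
  have d1: "((\<lambda>y. \<alpha> + w \<bullet> (y - a) + (1/2) * ((y - a) \<bullet> (S *v (y - a)))) has_derivative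
          (\<lambda>h. (w + S *v (y - a)) \<bullet> h)) (at y)" for y
  proof -
    have "((\<lambda>y. \<alpha> + w \<bullet> (y - a) + (1/2) * ((y - a) \<bullet> (S *v (y - a)))) has_derivative
          (\<lambda>h. w \<bullet> h + (1/2) * (h \<bullet> (S *v (y - a)) + (y - a) \<bullet> (S *v h)))) (at y)"
    proof -
      have da: "((\<lambda>y. y - a) has_derivative (\<lambda>h. h)) (at y)" by (intro derivative_eq_intros) auto
      have "((\<lambda>y. (y - a) \<bullet> (S *v (y - a))) has_derivative (\<lambda>h. (y - a) \<bullet> (S *v h) + h \<bullet> (S *v (y - a)))) (at y)"
        by (rule has_derivative_inner[OF da dS])
      note hQ = this
      have hL: "((\<lambda>y. w \<bullet> (y - a)) has_derivative (\<lambda>h. w \<bullet> h)) (at y)"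
        by (rule bounded_linear.has_derivative[OF bounded_linear_inner_right da])
      have "((\<lambda>y. \<alpha> + w \<bullet> (y - a) + (1/2) * ((y - a) \<bullet> (S *v (y - a)))) has_derivative
          (\<lambda>h. 0 + w \<bullet> h + (1/2) * ((y - a) \<bullet> (S *v h) + h \<bullet> (S *v (y - a))))) (at y)"
        by (rule has_derivative_add[OF has_derivative_add[OF has_derivative_const hL] has_derivative_mult_right[OF hQ]])
      then show ?thesis by (simp add: add_ac)
    qed
    moreover have "(\<lambda>h. w \<bullet> h + (1/2) * (h \<bullet> (S *v (y - a)) + (y - a) \<bullet> (S *v h))) = (\<lambda>h. (w + S *v (y - a)) \<bullet> h)"
    proof
      fix h
      have e1: "(y - a) \<bullet> (S *v h) = (S *v (y - a)) \<bullet> h" by (rule tr)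
      have e2: "h \<bullet> (S *v (y - a)) = (S *v (y - a)) \<bullet> h" by (rule inner_commute)
      show "w \<bullet> h + (1/2) * (h \<bullet> (S *v (y - a)) + (y - a) \<bullet> (S *v h)) = (w + S *v (y - a)) \<bullet> h"
        unfolding e1 e2 by (simp add: inner_add_left)
    qed
    ultimately show ?thesis by simp
  qed
  have d2: "((\<lambda>y. w + S *v (y - a)) has_derivative (\<lambda>h. S *v h)) (at y)" for y
  proof -
    have "((\<lambda>y. y - a) has_derivative (\<lambda>h. h)) (at y)" by (intro derivative_eq_intros) auto
    from bounded_linear.has_derivative[OF matrix_vector_mul_bounded_linear[of S] this]
    have "((\<lambda>y. S *v (y - a)) has_derivative (\<lambda>h. S *v h)) (at y)" .
    then show ?thesis by (intro derivative_eq_intros) auto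
  qed
  show ?thesis unfolding C2_on_def using d1 d2 by (simp add: continuous_on_const)
qed

lemma schwarz_aux:
  fixes \<phi> :: "real^'n::finite \<Rightarrow> real"
  assumes G: "open G" and x: "x \<in> G"
    and dphi: "\<And>y. y \<in> G \<Longrightarrow> (\<phi> has_derivative (\<lambda>h. D\<phi> y \<bullet> h)) (at y)"
    and dD: "(D\<phi> has_derivative (\<lambda>h. A *v h)) (at x)" and e: "\<epsilon> > 0"
  shows "\<exists>\<delta>>0. \<forall>t. 0 < t \<and> t < \<delta> \<longrightarrow>
     \<bar>\<phi> (x + t *\<^sub>R u + t *\<^sub>R w) - \<phi> (x + t *\<^sub>R u) - \<phi> (x + t *\<^sub>R w) + \<phi> x - t^2 * ((A *v w) \<bullet> u)\<bar>
       \<le> \<epsilon> * t^2 * ((2 * norm u + norm w) * norm u)"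
proof -
  obtain r where r: "r > 0" "ball x r \<subseteq> G" using G x open_contains_ball by blast
  obtain d where d: "d > 0" "\<And>y. norm (y - x) < d \<Longrightarrow> norm (D\<phi> y - D\<phi> x - A *v (y - x)) \<le> \<epsilon> * norm (y - x)"
    using dD e unfolding has_derivative_at_alt by blast
  define K where "K = norm u + norm w + 1"
  have K: "K > 0" "norm u + norm w \<le> K" unfolding K_def by (auto simp: add_nonneg_pos)
  define \<delta> where "\<delta> = min r d / K"
  have \<delta>: "\<delta> > 0" unfolding \<delta>_def using r d K by simp
  have "\<forall>t. 0 < t \<and> t < \<delta> \<longrightarrow>
     \<bar>\<phi> (x + t *\<^sub>R u + t *\<^sub>R w) - \<phi> (x + t *\<^sub>R u) - \<phi> (x + t *\<^sub>R w) + \<phi> x - t^2 * ((A *v w) \<bullet> u)\<bar>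
       \<le> \<epsilon> * t^2 * ((2 * norm u + norm w) * norm u)"
  proof (intro allI impI)
    fix t assume t: "0 < t \<and> t < \<delta>"
    have tK: "t * K < min r d" using t K unfolding \<delta>_def by (simp add: field_simps)
    have small: "norm (s *\<^sub>R u + \<tau> *\<^sub>R w) < min r d" if "0 \<le> s" "s \<le> t" "0 \<le> \<tau>" "\<tau> \<le> t" for s \<tau>
    proof -
      have "norm (s *\<^sub>R u + \<tau> *\<^sub>R w) \<le> norm (s *\<^sub>R u) + norm (\<tau> *\<^sub>R w)" by (rule norm_triangle_ineq)
      also have "\<dots> = s * norm u + \<tau> * norm w" using that by simp
      also have "\<dots> \<le> t * norm u + t * norm w"
        using that by (intro add_mono mult_right_mono) auto
      also have "\<dots> \<le> t * K" using K t by (simp add: distrib_left[symmetric] mult_left_mono)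
      finally show ?thesis using tK by simp
    qed
    have inG: "x + (s *\<^sub>R u + \<tau> *\<^sub>R w) \<in> G" if "0 \<le> s" "s \<le> t" "0 \<le> \<tau>" "\<tau> \<le> t" for s \<tau>
    proof -
      have "dist x (x + (s *\<^sub>R u + \<tau> *\<^sub>R w)) = norm (s *\<^sub>R u + \<tau> *\<^sub>R w)"
        by (metis add_diff_cancel_left' dist_commute dist_norm)
      then have "dist x (x + (s *\<^sub>R u + \<tau> *\<^sub>R w)) < r" using small[OF that] by simp
      then show ?thesis using r(2) by auto
    qed
    define g where "g s = \<phi> ((x + t *\<^sub>R w) + s *\<^sub>R u) - \<phi> (x + s *\<^sub>R u)" for s
    define g' where "g' s = (D\<phi> ((x + t *\<^sub>R w) + s *\<^sub>R u) - D\<phi> (x + s *\<^sub>R u)) \<bullet> u" for s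
    have der: "(g has_real_derivative g' s) (at s)" if "0 \<le> s" "s \<le> t" for s
    proof -
      have p1: "(x + t *\<^sub>R w) + s *\<^sub>R u \<in> G" using inG[OF that, of t] t by (simp add: add_ac)
      have p2: "x + s *\<^sub>R u \<in> G" using inG[OF that, of 0] t by simp
      have "((\<lambda>s. \<phi> ((x + t *\<^sub>R w) + s *\<^sub>R u)) has_real_derivative (D\<phi> ((x + t *\<^sub>R w) + s *\<^sub>R u) \<bullet> u)) (at s)"
        by (rule line_deriv[OF dphi[OF p1]])
      moreover have "((\<lambda>s. \<phi> (x + s *\<^sub>R u)) has_real_derivative (D\<phi> (x + s *\<^sub>R u) \<bullet> u)) (at s)"
        by (rule line_deriv[OF dphi[OF p2]])
      ultimately show ?thesis unfolding g_def g'_def inner_diff_left by (rule DERIV_diff)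
    qed
    obtain \<xi> where \<xi>: "0 < \<xi>" "\<xi> < t" "g t - g 0 = (t - 0) * g' \<xi>"
      using MVT2[of 0 t g g'] der t by auto
    define R where "R y = D\<phi> y - D\<phi> x - A *v (y - x)" for y
    define y1 where "y1 = (x + t *\<^sub>R w) + \<xi> *\<^sub>R u"
    define y2 where "y2 = x + \<xi> *\<^sub>R u"
    have n1: "norm (y1 - x) \<le> t * norm u + t * norm w"
    proof -
      have "norm (y1 - x) = norm (\<xi> *\<^sub>R u + t *\<^sub>R w)" by (simp add: y1_def algebra_simps)
      also have "\<dots> \<le> norm (\<xi> *\<^sub>R u) + norm (t *\<^sub>R w)" by (rule norm_triangle_ineq)
      also have "\<dots> \<le> t * norm u + t * norm w" using \<xi> t by (auto intro!: add_mono mult_right_mono)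
      finally show ?thesis .
    qed
    have n2: "norm (y2 - x) \<le> t * norm u" using \<xi> by (simp add: y2_def mult_right_mono)
    have s1: "norm (y1 - x) < d"
      using small[of \<xi> t] \<xi> t by (simp add: y1_def algebra_simps)
    have s2: "norm (y2 - x) < d"
      using small[of \<xi> 0] \<xi> t by (simp add: y2_def)
    have R1: "norm (R y1) \<le> \<epsilon> * norm (y1 - x)" using d(2)[OF s1] by (simp add: R_def)
    have R2: "norm (R y2) \<le> \<epsilon> * norm (y2 - x)" using d(2)[OF s2] by (simp add: R_def)
    have gx: "g' \<xi> - t * ((A *v w) \<bullet> u) = (R y1 - R y2) \<bullet> u"
    proof -
      have dd: "(y1 - x) - (y2 - x) = t *\<^sub>R w" by (simp add: y1_def y2_def)
      have "A *v (y1 - x) - A *v (y2 - x) = A *v ((y1 - x) - (y2 - x))"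
        by (simp only: matrix_vector_mult_diff_distrib)
      also have "\<dots> = t *\<^sub>R (A *v w)" by (simp only: dd matrix_vector_mult_scaleR)
      finally have aa: "A *v (y1 - x) - A *v (y2 - x) = t *\<^sub>R (A *v w)" .
      have "D\<phi> y1 - D\<phi> y2 = R y1 - R y2 + (A *v (y1 - x) - A *v (y2 - x))"
        by (simp add: R_def algebra_simps)
      then have "D\<phi> y1 - D\<phi> y2 = R y1 - R y2 + t *\<^sub>R (A *v w)" by (simp only: aa)
      then have "g' \<xi> = (R y1 - R y2 + t *\<^sub>R (A *v w)) \<bullet> u"
        by (simp add: g'_def y1_def[symmetric] y2_def[symmetric])
      then show ?thesis by (simp add: inner_add_left)
    qed
    have "\<bar>(R y1 - R y2) \<bullet> u\<bar> \<le> norm (R y1 - R y2) * norm u" by (rule Cauchy_Schwarz_ineq2)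
    also have "\<dots> \<le> (norm (R y1) + norm (R y2)) * norm u"
      by (intro mult_right_mono norm_triangle_ineq4) auto
    also have "\<dots> \<le> (\<epsilon> * (t * norm u + t * norm w) + \<epsilon> * (t * norm u)) * norm u"
      using R1 R2 n1 n2 e by (intro mult_right_mono add_mono) (auto intro: order_trans mult_left_mono)
    also have "\<dots> = \<epsilon> * t * ((2 * norm u + norm w) * norm u)" by (simp add: algebra_simps)
    finally have b1: "\<bar>g' \<xi> - t * ((A *v w) \<bullet> u)\<bar> \<le> \<epsilon> * t * ((2 * norm u + norm w) * norm u)"
      using gx by simp
    have "\<phi> (x + t *\<^sub>R u + t *\<^sub>R w) - \<phi> (x + t *\<^sub>R u) - \<phi> (x + t *\<^sub>R w) + \<phi> x - t^2 * ((A *v w) \<bullet> u)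
        = t * (g' \<xi> - t * ((A *v w) \<bullet> u))"
      using \<xi>(3) by (simp add: g_def algebra_simps power2_eq_square)
    then have "\<bar>\<phi> (x + t *\<^sub>R u + t *\<^sub>R w) - \<phi> (x + t *\<^sub>R u) - \<phi> (x + t *\<^sub>R w) + \<phi> x - t^2 * ((A *v w) \<bullet> u)\<bar>
        = t * \<bar>g' \<xi> - t * ((A *v w) \<bullet> u)\<bar>" using t by (simp add: abs_mult)
    also have "\<dots> \<le> t * (\<epsilon> * t * ((2 * norm u + norm w) * norm u))"
      using b1 t by (intro mult_left_mono) auto
    also have "\<dots> = \<epsilon> * t^2 * ((2 * norm u + norm w) * norm u)" by (simp add: power2_eq_square)
    finally show "\<bar>\<phi> (x + t *\<^sub>R u + t *\<^sub>R w) - \<phi> (x + t *\<^sub>R u) - \<phi> (x + t *\<^sub>R w) + \<phi> x - t^2 * ((A *v w) \<bullet> u)\<bar>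
       \<le> \<epsilon> * t^2 * ((2 * norm u + norm w) * norm u)" .
  qed
  then show ?thesis using \<delta> by blast
qed

lemma hess_sym:
  fixes \<phi> :: "real^'n::finite \<Rightarrow> real"
  assumes C2: "C2_on G \<phi> D\<phi> D2\<phi>" and G: "open G" and x: "x \<in> G"
  shows "sym_mat (D2\<phi> x)"
proof -
  define A where "A = D2\<phi> x"
  have dphi: "\<And>y. y \<in> G \<Longrightarrow> (\<phi> has_derivative (\<lambda>h. D\<phi> y \<bullet> h)) (at y)"
   and dD: "(D\<phi> has_derivative (\<lambda>h. A *v h)) (at x)" using C2 x unfolding C2_on_def A_def by auto
  have key: "(A *v w) \<bullet> u = (A *v u) \<bullet> w" for u w
  proof -
    define a where "a = (A *v w) \<bullet> u"
    define b where "b = (A *v u) \<bullet> w"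
    define C1 where "C1 = (2 * norm u + norm w) * norm u"
    define C2 where "C2 = (2 * norm w + norm u) * norm w"
    have C: "0 \<le> C1" "0 \<le> C2" unfolding C1_def C2_def by auto
    have bnd: "\<bar>a - b\<bar> \<le> \<epsilon> * (C1 + C2)" if e: "\<epsilon> > 0" for \<epsilon>
    proof -
      obtain d1 where d1: "d1 > 0" "\<forall>t. 0 < t \<and> t < d1 \<longrightarrow>
         \<bar>\<phi> (x + t *\<^sub>R u + t *\<^sub>R w) - \<phi> (x + t *\<^sub>R u) - \<phi> (x + t *\<^sub>R w) + \<phi> x - t^2 * a\<bar> \<le> \<epsilon> * t^2 * C1"
        using schwarz_aux[OF G x dphi dD e, of u w] unfolding a_def C1_def by blast
      obtain d2 where d2: "d2 > 0" "\<forall>t. 0 < t \<and> t < d2 \<longrightarrow>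
         \<bar>\<phi> (x + t *\<^sub>R w + t *\<^sub>R u) - \<phi> (x + t *\<^sub>R w) - \<phi> (x + t *\<^sub>R u) + \<phi> x - t^2 * b\<bar> \<le> \<epsilon> * t^2 * C2"
        using schwarz_aux[OF G x dphi dD e, of w u] unfolding b_def C2_def by blast
      define t where "t = min d1 d2 / 2"
      have t: "0 < t" "t < d1" "t < d2" using d1 d2 by (auto simp: t_def)
      define \<Delta> where "\<Delta> = \<phi> (x + t *\<^sub>R u + t *\<^sub>R w) - \<phi> (x + t *\<^sub>R u) - \<phi> (x + t *\<^sub>R w) + \<phi> x"
      have "x + t *\<^sub>R w + t *\<^sub>R u = x + t *\<^sub>R u + t *\<^sub>R w" by (simp add: add_ac)
      then have h1: "\<bar>\<Delta> - t^2 * a\<bar> \<le> \<epsilon> * t^2 * C1" and h2: "\<bar>\<Delta> - t^2 * b\<bar> \<le> \<epsilon> * t^2 * C2"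
        using d1(2) d2(2) t unfolding \<Delta>_def by (auto simp: algebra_simps)
      have eq: "t^2 * (a - b) = (\<Delta> - t^2 * b) - (\<Delta> - t^2 * a)" by (simp add: algebra_simps)
      have "t^2 * \<bar>a - b\<bar> = \<bar>(\<Delta> - t^2 * b) - (\<Delta> - t^2 * a)\<bar>"
        unfolding eq[symmetric] by (simp add: abs_mult)
      also have "\<dots> \<le> \<bar>\<Delta> - t^2 * b\<bar> + \<bar>\<Delta> - t^2 * a\<bar>" by (rule abs_triangle_ineq4)
      also have "\<dots> \<le> t^2 * (\<epsilon> * (C1 + C2))" using h1 h2 by (simp add: algebra_simps)
      finally show ?thesis using t by simp
    qed
    show ?thesis
    proof (rule ccontr)
      assume "\<not> ?thesis"
      then have ab: "0 < \<bar>a - b\<bar>" unfolding a_def b_def by simp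
      define \<epsilon> where "\<epsilon> = \<bar>a - b\<bar> / (C1 + C2 + 1)"
      have ep: "\<epsilon> > 0" using ab C unfolding \<epsilon>_def by simp
      have "\<bar>a - b\<bar> \<le> \<epsilon> * (C1 + C2)" by (rule bnd[OF ep])
      also have "\<dots> < \<epsilon> * (C1 + C2 + 1)" using ep by simp
      also have "\<dots> = \<bar>a - b\<bar>" unfolding \<epsilon>_def using C by simp
      finally show False by simp
    qed
  qed
  have "A$i$j = A$j$i" for i j
    using key[of "axis j 1" "axis i 1"]
    by (simp add: matrix_vector_mult_basis inner_commute[of "column _ A"] inner_axis')
  then show ?thesis unfolding A_def sym_mat_def by (simp add: vec_eq_iff transpose_def A_def)
qed

lemma usc_diff_local:
  fixes u \<psi> :: "real^'n::finite \<Rightarrow> real"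
  assumes usc: "usc_on \<Omega> u" and c: "continuous_on UNIV \<psi>" and x: "x \<in> \<Omega>" and lt: "u x - \<psi> x < t"
  shows "\<exists>e>0. \<forall>y\<in>\<Omega>. dist y x < e \<longrightarrow> u y - \<psi> y < t"
proof -
  define \<eta> where "\<eta> = t - (u x - \<psi> x)"
  have \<eta>: "\<eta> > 0" using lt by (simp add: \<eta>_def)
  have "\<forall>\<^sub>F y in at x within \<Omega>. u y < u x + \<eta>/2"
    using usc x \<eta> unfolding usc_on_def by simp
  then obtain d1 where d1: "d1 > 0" "\<forall>y\<in>\<Omega>. y \<noteq> x \<and> dist y x < d1 \<longrightarrow> u y < u x + \<eta>/2"
    unfolding eventually_at by blast
  obtain d2 where d2: "d2 > 0" "\<forall>y\<in>UNIV. dist y x < d2 \<longrightarrow> dist (\<psi> y) (\<psi> x) < \<eta>/2"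
    using c \<eta> unfolding continuous_on_iff by (metis UNIV_I half_gt_zero)
  show ?thesis
  proof (intro exI[of _ "min d1 d2"] conjI ballI impI)
    show "0 < min d1 d2" using d1 d2 by simp
  next
    fix y assume y: "y \<in> \<Omega>" "dist y x < min d1 d2"
    have "dist (\<psi> y) (\<psi> x) < \<eta>/2" using d2 y by simp
    then have "\<bar>\<psi> y - \<psi> x\<bar> < \<eta>/2" by (simp only: dist_real_def)
    then have p: "\<psi> x - \<eta>/2 < \<psi> y" by (simp only: abs_less_iff) linarith
    show "u y - \<psi> y < t"
    proof (cases "y = x")
      case True then show ?thesis using lt by simp
    next
      case False
      then have "u y < u x + \<eta>/2" using d1 y by simp
      then show ?thesis using p unfolding \<eta>_def by (simp add: field_simps)
    qed
  qed
qed

lemma usc_pt: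
  fixes u :: "real^'n::finite \<Rightarrow> real"
  assumes usc: "usc_on \<Omega> u" and x: "x \<in> \<Omega>" and \<eta>: "\<eta> > 0"
  shows "\<exists>r>0. \<forall>y\<in>\<Omega>. dist y x < r \<longrightarrow> u y < u x + \<eta>"
  using usc_diff_local[OF usc continuous_on_const x, of "0" "u x + \<eta>"] \<eta> by simp

lemma qdist:
  fixes y a e :: "real^'n::finite"
  assumes E: "e \<bullet> e > 0"
  shows "(norm (y - (a + (((y - a) \<bullet> e) / (e \<bullet> e)) *\<^sub>R e)))^2
          = (y - a) \<bullet> (y - a) - ((y - a) \<bullet> e)^2 / (e \<bullet> e)"
proof -
  define h where "h = y - a"
  define c where "c = h \<bullet> e"
  define E' where "E' = e \<bullet> e"
  have eq: "y - (a + (c / E') *\<^sub>R e) = h - (c / E') *\<^sub>R e" by (simp add: h_def algebra_simps)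
  have "(norm (y - (a + (c / E') *\<^sub>R e)))^2 = (h - (c / E') *\<^sub>R e) \<bullet> (h - (c / E') *\<^sub>R e)"
    unfolding eq by (simp add: power2_norm_eq_inner)
  also have "\<dots> = h \<bullet> h - 2 * (c / E') * c + (c / E') * (c / E') * E'"
    by (simp add: inner_diff_left inner_diff_right c_def E'_def inner_commute)
  also have "\<dots> = h \<bullet> h - c^2 / E'" using E by (simp add: E'_def field_simps power2_eq_square)
  finally show ?thesis by (simp add: h_def c_def E'_def)
qed

lemma quad_S:
  fixes e h :: "real^'n::finite"
  shows "h \<bullet> (((2*K) *\<^sub>R mat 1 - (2*\<mu>) *\<^sub>R outer e) *v h) = 2*K*(h \<bullet> h) - 2*\<mu>*(e \<bullet> h)^2"
proof -
  have "((2*K) *\<^sub>R mat 1 - (2*\<mu>) *\<^sub>R outer e) *v h = (2*K) *\<^sub>R h - (2*\<mu>*(e \<bullet> h)) *\<^sub>R e"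
    by (simp add: matrix_vector_mult_diff_rdistrib scaleR_matrix_vector_assoc[symmetric] outer_mulv)
  then show ?thesis by (simp add: inner_diff_right inner_commute power2_eq_square)
qed

lemma sym_S: "sym_mat ((2*K) *\<^sub>R mat 1 - (2*\<mu>) *\<^sub>R outer (e::real^'n::finite))"
  unfolding sym_mat_def by (simp add: vec_eq_iff transpose_def mat_def outer_def mult.commute)

lemma convex_core:
  fixes u f :: "real^'n::finite \<Rightarrow> real" and a b :: "real^'n"
  assumes card: "2 \<le> CARD('n)" and bdd: "bounded \<Omega>" and op: "open \<Omega>" and cvx: "convex \<Omega>"
    and f0: "\<forall>x\<in>\<Omega>. 0 \<le> f x"
    and usc: "usc_on \<Omega> u"
    and test: "\<And>\<phi> D\<phi> D2\<phi> x. C2_on \<Omega> \<phi> D\<phi> D2\<phi> \<Longrightarrow> x \<in> \<Omega> \<Longrightarrow>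
                local_max_at \<Omega> (\<lambda>y. u y - \<phi> y) x \<Longrightarrow> bellmanH (D2\<phi> x) (f x) \<le> 0"
    and a: "a \<in> \<Omega>" and b: "b \<in> \<Omega>" and ab: "a \<noteq> b" and s: "0 < s" "s < 1"
    and bad: "(1 - s) * u a + s * u b < u (a + s *\<^sub>R (b - a))"
  shows False
proof -
  define e where "e = b - a"
  define E where "E = e \<bullet> e"
  have Epos: "E > 0" using ab unfolding E_def e_def by simp
  define p where "p y = ((y - a) \<bullet> e) / E" for y
  define q where "q y = (y - a) \<bullet> (y - a) - ((y - a) \<bullet> e)^2 / E" for y
  define lf where "lf y = u a + (u b - u a) * p y" for y
  define zs where "zs = a + s *\<^sub>R e"
  have pz: "p zs = s" using Epos by (simp add: p_def zs_def E_def)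
  have qz: "q zs = 0" using Epos by (simp add: q_def zs_def E_def power2_eq_square field_simps)
  define \<eta> where "\<eta> = u zs - lf zs"
  have \<eta>: "\<eta> > 0" using bad pz unfolding \<eta>_def lf_def zs_def e_def by (simp add: algebra_simps)
  have \<eta>2: "\<eta>/2 > 0" using \<eta> by simp
  obtain ra where ra: "ra > 0" "\<forall>y\<in>\<Omega>. dist y a < ra \<longrightarrow> u y < u a + \<eta>/2"
    using usc_pt[OF usc a \<eta>2] by blast
  obtain rb where rb: "rb > 0" "\<forall>y\<in>\<Omega>. dist y b < rb \<longrightarrow> u y < u b + \<eta>/2"
    using usc_pt[OF usc b \<eta>2] by blast
  have seg: "closed_segment a b \<subseteq> \<Omega>" by (rule closed_segment_subset[OF a b cvx])
  obtain \<epsilon>0 where \<epsilon>0: "\<epsilon>0 > 0" "(\<Union>x\<in>closed_segment a b. cball x \<epsilon>0) \<subseteq> \<Omega>"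
    using compact_subset_open_imp_cball_epsilon_subset[OF compact_segment op seg] by blast
  define \<rho> where "\<rho> = min \<epsilon>0 (min ra rb) / 2"
  have \<rho>: "\<rho> > 0" "\<rho> < ra" "\<rho> < rb" "\<rho> \<le> \<epsilon>0" using \<epsilon>0 ra rb by (auto simp: \<rho>_def)
  define T where "T = {y. 0 \<le> p y \<and> p y \<le> 1 \<and> q y \<le> \<rho>^2}"
  have qd: "q y = (norm (y - (a + p y *\<^sub>R e)))^2" for y
    using qdist[of e y a] Epos unfolding q_def p_def E_def by simp
  have q0: "0 \<le> q y" for y using qd by simp
  have nq: "norm (y - (a + p y *\<^sub>R e)) \<le> \<rho>" if "q y \<le> \<rho>^2" for y
    using that qd \<rho> by (metis norm_ge_zero power2_le_imp_le less_imp_le)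
  have TO: "T \<subseteq> \<Omega>"
  proof
    fix y assume y: "y \<in> T"
    define c where "c = a + p y *\<^sub>R e"
    have py: "0 \<le> p y" "p y \<le> 1" "q y \<le> \<rho>^2" using y by (simp_all add: T_def)
    have "c = (1 - p y) *\<^sub>R a + p y *\<^sub>R b" by (simp add: c_def e_def algebra_simps)
    then have cs: "c \<in> closed_segment a b" unfolding in_segment using py by blast
    have "dist y c \<le> \<rho>" using nq[OF py(3)] by (simp add: c_def dist_norm)
    then have "y \<in> cball c \<epsilon>0" using \<rho>(4) by (simp add: dist_commute)
    moreover have "cball c \<epsilon>0 \<subseteq> \<Omega>" using \<epsilon>0(2) cs by blast
    ultimately show "y \<in> \<Omega>" by blast
  qed
  have cp: "continuous_on UNIV p" unfolding p_def using Epos by (intro continuous_intros) auto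
  have cq: "continuous_on UNIV q" unfolding q_def using Epos by (intro continuous_intros) auto
  have cl: "continuous_on UNIV lf" unfolding lf_def p_def using Epos by (intro continuous_intros) auto
  have closedT: "closed T" unfolding T_def
    by (intro closed_Collect_conj closed_Collect_le cp cq continuous_on_const)
  have compT: "compact T" using closedT bounded_subset[OF bdd TO] by (simp add: compact_eq_bounded_closed)
  have zT: "zs \<in> T" using pz qz s \<rho> by (simp add: T_def)
  have uscT: "\<exists>ee>0. \<forall>y\<in>T. dist y x < ee \<longrightarrow> u y - \<psi> y < t"
    if h\<psi>: "continuous_on UNIV \<psi>" and hx: "x \<in> T" and ht: "u x - \<psi> x < t" for \<psi> x t
  proof -
    obtain ee where "ee > 0" "\<forall>y\<in>\<Omega>. dist y x < ee \<longrightarrow> u y - \<psi> y < t"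
      using usc_diff_local[OF usc h\<psi> _ ht] hx TO by blast
    then show ?thesis using TO by blast
  qed
  obtain y1 where y1: "y1 \<in> T" "\<forall>y\<in>T. u y - lf y \<le> u y1 - lf y1"
    using usc_max[OF compT _ uscT[OF cl]] zT by blast
  define M1 where "M1 = u y1 - lf y1"
  define K where "K = (\<bar>M1\<bar> + 1) / \<rho>^2"
  have K0: "0 \<le> K" unfolding K_def by simp
  have K\<rho>: "K * \<rho>^2 = \<bar>M1\<bar> + 1" using \<rho> unfolding K_def by simp
  define \<sigma> where "\<sigma> = \<eta>"
  define \<mu> where "\<mu> = \<sigma> / E^2 + K / E"
  define S :: "'n mat" where "S = (2*K) *\<^sub>R mat 1 - (2*\<mu>) *\<^sub>R outer e"
  define w where "w = ((u b - u a + \<sigma>) / E) *\<^sub>R e"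
  define \<phi> where "\<phi> y = u a + w \<bullet> (y - a) + (1/2) * ((y - a) \<bullet> (S *v (y - a)))" for y
  have symS: "sym_mat S" unfolding S_def by (rule sym_S)
  have \<phi>id: "\<phi> y = lf y + \<sigma> * (p y * (1 - p y)) + K * q y" for y
  proof -
    define h where "h = y - a"
    define c where "c = h \<bullet> e"
    have ec: "e \<bullet> h = c" by (simp add: c_def inner_commute)
    have "\<phi> y = u a + ((u b - u a + \<sigma>) / E) * c + (1/2) * (2*K*(h \<bullet> h) - 2*\<mu>*c^2)"
      unfolding \<phi>_def S_def quad_S w_def by (simp add: h_def[symmetric] ec c_def)
    also have "\<dots> = lf y + \<sigma> * (p y * (1 - p y)) + K * q y"
      unfolding lf_def p_def q_def h_def[symmetric] c_def[symmetric] \<mu>_def using Epos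
      by (simp add: field_simps power2_eq_square)
    finally show ?thesis .
  qed
  have C2: "C2_on G \<phi> (\<lambda>y. w + S *v (y - a)) (\<lambda>y. S)" for G
    unfolding \<phi>_def by (rule quad_C2[OF symS])
  have c\<phi>: "continuous_on UNIV \<phi>"
  proof -
    have "\<forall>x. (\<phi> has_derivative (\<lambda>h. (w + S *v (x - a)) \<bullet> h)) (at x)"
      using C2[of UNIV] unfolding C2_on_def by blast
    then show ?thesis
      by (intro continuous_at_imp_continuous_on ballI has_derivative_continuous) blast
  qed
  obtain ys where ys: "ys \<in> T" "\<forall>y\<in>T. u y - \<phi> y \<le> u ys - \<phi> ys"
    using usc_max[OF compT _ uscT[OF c\<phi>]] zT by blast
  have "s * (1 - s) \<le> 1/4"
  proof -
    have "0 \<le> (s - 1/2)^2" by simp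
    then show ?thesis by (simp add: power2_eq_square algebra_simps)
  qed
  then have "\<sigma> * (s * (1 - s)) \<le> \<sigma> / 4" using \<eta> unfolding \<sigma>_def
    by (metis mult_left_mono less_imp_le mult.right_neutral times_divide_eq_right)
  moreover have "u zs - \<phi> zs = \<eta> - \<sigma> * (s * (1 - s))" by (simp add: \<phi>id pz qz \<eta>_def)
  ultimately have Vz: "\<eta> / 2 < u zs - \<phi> zs" using \<eta> unfolding \<sigma>_def by linarith
  have V: "\<eta> / 2 < u ys - \<phi> ys" using Vz ys(2) zT by fastforce
  have ysT: "0 \<le> p ys" "p ys \<le> 1" "q ys \<le> \<rho>^2" using ys(1) by (auto simp: T_def)
  have ysO: "ys \<in> \<Omega>" using ys(1) TO by blast
  have pp0: "0 \<le> p ys * (1 - p ys)" using ysT by simp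
  have \<phi>ge: "lf ys \<le> \<phi> ys" unfolding \<phi>id using pp0 K0 q0[of ys] \<eta> unfolding \<sigma>_def by simp
  have np0: "p ys \<noteq> 0"
  proof
    assume p0: "p ys = 0"
    have "dist ys a \<le> \<rho>" using nq[OF ysT(3)] p0 by (simp add: dist_norm)
    then have "u ys < u a + \<eta>/2" using ra \<rho> ysO by auto
    moreover have "lf ys = u a" using p0 by (simp add: lf_def)
    ultimately show False using V \<phi>ge by simp
  qed
  have np1: "p ys \<noteq> 1"
  proof
    assume p1: "p ys = 1"
    have "a + 1 *\<^sub>R e = b" by (simp add: e_def)
    then have "dist ys b \<le> \<rho>" using nq[OF ysT(3)] p1 by (simp add: dist_norm)
    then have "u ys < u b + \<eta>/2" using rb \<rho> ysO by auto
    moreover have "lf ys = u b" using p1 by (simp add: lf_def)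
    ultimately show False using V \<phi>ge by simp
  qed
  have nq\<rho>: "q ys \<noteq> \<rho>^2"
  proof
    assume q\<rho>: "q ys = \<rho>^2"
    have eq: "u ys - \<phi> ys = (u ys - lf ys) - \<sigma> * (p ys * (1 - p ys)) - K * \<rho>^2"
      unfolding \<phi>id q\<rho> by simp
    have a1: "u ys - lf ys \<le> M1" using y1(2) ys(1) unfolding M1_def by blast
    have a2: "0 \<le> \<sigma> * (p ys * (1 - p ys))" using pp0 \<eta> unfolding \<sigma>_def by simp
    have a3: "M1 \<le> \<bar>M1\<bar>" by simp
    have "u ys - \<phi> ys < 0" using eq a1 a2 a3 K\<rho> by linarith
    then show False using V \<eta> by simp
  qed
  define U where "U = {y. 0 < p y \<and> p y < 1 \<and> q y < \<rho>^2}"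
  have openU: "open U" unfolding U_def
    by (intro open_Collect_conj open_Collect_less cp cq continuous_on_const)
  have ysU: "ys \<in> U" using ysT np0 np1 nq\<rho> by (auto simp: U_def)
  have UT: "U \<subseteq> T" by (auto simp: U_def T_def)
  obtain r where r: "r > 0" "ball ys r \<subseteq> U" using openU ysU open_contains_ball by blast
  have lm: "local_max_at \<Omega> (\<lambda>y. u y - \<phi> y) ys"
    unfolding local_max_at_def using r UT ys(2) by blast
  have H: "bellmanH S (f ys) \<le> 0" using test[OF C2 ysO lm] by simp
  define e1 where "e1 = (1 / norm e) *\<^sub>R e"
  have ne: "norm e \<noteq> 0" using Epos by (auto simp: E_def)
  have e1n: "norm e1 = 1" using ne by (simp add: e1_def)
  have B: "outer e1 \<in> S1" by (rule outer_S1[OF e1n])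
  have d0: "det (outer e1) = 0" by (rule det_outer[OF card])
  have "- frob (outer e1) S + f ys * root CARD('n) (det (outer e1)) \<le> bellmanH S (f ys)"
    by (rule bellman_upper[OF _ B]) (use f0 ysO in auto)
  then have le: "- (e1 \<bullet> (S *v e1)) \<le> 0" using H d0 by (simp add: frob_outer)
  have "e \<bullet> (S *v e) = 2*K*E - 2*\<mu>*E^2" unfolding S_def quad_S by (simp add: E_def)
  also have "\<dots> = - 2 * \<sigma>" using Epos by (simp add: \<mu>_def field_simps power2_eq_square)
  finally have eSe: "e \<bullet> (S *v e) = - 2 * \<sigma>" .
  have "e1 \<bullet> (S *v e1) = (1 / norm e)^2 * (e \<bullet> (S *v e))"
    by (simp add: e1_def matrix_vector_mult_scaleR power2_eq_square)
  also have "\<dots> < 0" using eSe \<eta> ne unfolding \<sigma>_def by (simp add: mult_pos_neg)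
  finally show False using le by simp
qed

lemma visc_convex:
  fixes \<Omega> :: "(real^'n::finite) set" and f u :: "real^'n \<Rightarrow> real"
  assumes card: "CARD('n) \<ge> 2" and bdd: "bounded \<Omega>" and op: "open \<Omega>" and cvx: "convex \<Omega>"
    and f0: "\<forall>x\<in>\<Omega>. f x \<ge> 0"
    and sub: "visc_sub \<Omega> (\<lambda>A x. bellmanH A (f x)) u"
  shows "convex_on \<Omega> u"
proof -
  have usc: "usc_on \<Omega> u" using sub by (simp add: visc_sub_def)
  have test: "\<And>\<phi> D\<phi> D2\<phi> x. C2_on \<Omega> \<phi> D\<phi> D2\<phi> \<Longrightarrow> x \<in> \<Omega> \<Longrightarrow>
                local_max_at \<Omega> (\<lambda>y. u y - \<phi> y) x \<Longrightarrow> bellmanH (D2\<phi> x) (f x) \<le> 0"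
    using sub unfolding visc_sub_def by blast
  show ?thesis unfolding convex_on_def
  proof (intro conjI ballI allI impI)
    show "convex \<Omega>" by (rule cvx)
  next
    fix x y :: "real^'n" and \<alpha> \<beta> :: real
    assume x: "x \<in> \<Omega>" and y: "y \<in> \<Omega>" and a0: "0 \<le> \<alpha>" and b0: "0 \<le> \<beta>" and ab: "\<alpha> + \<beta> = 1"
    have \<alpha>: "\<alpha> = 1 - \<beta>" using ab by simp
    have eqz: "\<alpha> *\<^sub>R x + \<beta> *\<^sub>R y = x + \<beta> *\<^sub>R (y - x)" unfolding \<alpha> by (simp add: algebra_simps)
    show "u (\<alpha> *\<^sub>R x + \<beta> *\<^sub>R y) \<le> \<alpha> * u x + \<beta> * u y"
    proof (cases "x = y \<or> \<beta> = 0 \<or> \<beta> = 1")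
      case True
      then show ?thesis
      proof (elim disjE)
        assume "x = y" then show ?thesis using ab by (simp add: scaleR_left_distrib[symmetric] distrib_right[symmetric])
      next
        assume "\<beta> = 0" then show ?thesis using \<alpha> by simp
      next
        assume "\<beta> = 1" then show ?thesis using \<alpha> by simp
      qed
    next
      case False
      then have xy: "x \<noteq> y" and s: "0 < \<beta>" "\<beta> < 1" using b0 ab a0 by auto
      show ?thesis
      proof (rule ccontr)
        assume "\<not> ?thesis"
        then have bad: "(1 - \<beta>) * u x + \<beta> * u y < u (x + \<beta> *\<^sub>R (y - x))" using eqz \<alpha> by simp
        note cc = convex_core[where \<Omega>=\<Omega> and f=f and u=u and a=x and b=y and s=\<beta>, OF card bdd op cvx f0 usc _ x y xy s bad]
        show False by (rule cc) (rule test)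
      qed
    qed
  qed
qed

lemma ma_sub:
  fixes A :: "'n::finite mat"
  assumes sym: "sym_mat A" and psd: "\<forall>v. 0 \<le> v \<bullet> (A *v v)" and f0: "0 \<le> f" and H: "bellmanH A f \<le> 0"
  shows "mongeM A f \<le> 0"
proof -
  have psdA: "psd_mat A" using sym psd by (simp add: psd_mat_def)
  have "\<forall>B\<in>S1. f * root CARD('n) (det B) \<le> frob B A"
  proof
    fix B :: "'n mat" assume B: "B \<in> S1"
    have "- frob B A + f * root CARD('n) (det B) \<le> bellmanH A f" by (rule bellman_upper[OF f0 B])
    then show "f * root CARD('n) (det B) \<le> frob B A" using H by linarith
  qed
  from sub_ineq[OF psdA f0 this] show ?thesis by (simp add: mongeM_def)
qed

lemma ma_super:
  fixes A :: "'n::finite mat"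
  assumes sym: "sym_mat A" and psd: "\<forall>v. 0 \<le> v \<bullet> (A *v v)" and f0: "0 \<le> f" and H: "0 \<le> bellmanH A f"
  shows "0 \<le> mongeM A f"
proof (cases "det A \<le> 0")
  case True
  have "0 \<le> (f / real CARD('n))^CARD('n)" using f0 by simp
  then show ?thesis using True by (simp add: mongeM_def)
next
  case False
  then have dA: "0 < det A" by simp
  have psdA: "psd_mat A" using sym psd by (simp add: psd_mat_def)
  define d where "d = CARD('n)"
  have d0: "0 < d" unfolding d_def by simp
  obtain m where m: "m > 0" "\<forall>B\<in>S1. m \<le> frob B A \<and>
     real CARD('n) * root CARD('n) (det A) * root CARD('n) (det B) \<le> frob B A"
    using super_ineq[OF psdA dA] by blast
  show ?thesis
  proof (rule ccontr)
    assume "\<not> ?thesis"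
    then have lt: "(f / d)^d < det A" by (simp add: mongeM_def d_def)
    define rA where "rA = root d (det A)"
    have "root d ((f / d)^d) < rA" unfolding rA_def using lt d0 by simp
    moreover have "root d ((f / d)^d) = f / d" using f0 d0 by (simp add: real_root_power_cancel)
    ultimately have "f / d < rA" by simp
    then have "f < d * rA" using d0 by (simp add: field_simps)
    define \<gamma> where "\<gamma> = d * rA - f"
    have \<gamma>: "\<gamma> > 0" using \<open>f < d * rA\<close> by (simp add: \<gamma>_def)
    define \<delta> where "\<delta> = m * \<gamma> / (f + \<gamma>)"
    have fg: "0 < f + \<gamma>" using f0 \<gamma> by simp
    have \<delta>: "\<delta> > 0" unfolding \<delta>_def using m \<gamma> fg by simp
    obtain B where B: "B \<in> S1" "- \<delta> < - frob B A + f * root CARD('n) (det B)"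
      using bellman_approx[OF f0 H \<delta>] by blast
    define rB where "rB = root d (det B)"
    have rB0: "0 \<le> rB" using root_det_le1[OF B(1)] by (simp add: rB_def d_def)
    have fr: "frob B A < f * rB + \<delta>" using B(2) by (simp add: rB_def d_def)
    have m1: "m \<le> frob B A" and m2: "d * rA * rB \<le> frob B A"
      using m(2) B(1) by (auto simp: rA_def rB_def d_def)
    have "d * rA * rB < f * rB + \<delta>" using m2 fr by simp
    then have "\<gamma> * rB < \<delta>" by (simp add: \<gamma>_def algebra_simps)
    then have rBb: "rB \<le> \<delta> / \<gamma>" using \<gamma> by (simp add: field_simps)
    have "f * rB \<le> f * (\<delta> / \<gamma>)" using rBb f0 by (rule mult_left_mono[OF _ ]) 
    then have "m < f * (\<delta> / \<gamma>) + \<delta>" using m1 fr by simp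
    also have "f * (\<delta> / \<gamma>) + \<delta> = \<delta> * (f + \<gamma>) / \<gamma>" using \<gamma> by (simp add: field_simps)
    also have "\<dots> = m" unfolding \<delta>_def using \<gamma> fg by simp
    finally show False by simp
  qed
qed

theorem theorem3p5:
  fixes \<Omega> :: "(real^'n::finite) set"
    and f u :: "real^'n \<Rightarrow> real"
  assumes "CARD('n) \<ge> 2"
    and "bounded \<Omega>" and "open \<Omega>" and "strictly_convex_set \<Omega>"
    and "continuous_on \<Omega> f" and "\<forall>x\<in>\<Omega>. f x \<ge> 0"
    and "visc_sol \<Omega> (\<lambda>A x. bellmanH A (f x)) u"
  shows "visc_sol_cvx \<Omega> (\<lambda>A x. mongeM A (f x)) u"
proof -
  note card = assms(1) and bdd = assms(2) and op = assms(3) and f0 = assms(6)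
  have cvx: "convex \<Omega>" using assms(4) by (simp add: strictly_convex_set_def)
  have sub: "visc_sub \<Omega> (\<lambda>A x. bellmanH A (f x)) u"
   and super: "visc_super \<Omega> (\<lambda>A x. bellmanH A (f x)) u"
    using assms(7) by (auto simp: visc_sol_def)
  have usc: "usc_on \<Omega> u" using sub by (simp add: visc_sub_def)
  have lsc: "lsc_on \<Omega> u" using super by (simp add: visc_super_def)
  have cu: "convex_on \<Omega> u" by (rule visc_convex[OF card bdd op cvx f0 sub])
  have S: "mongeM (D2\<phi> x) (f x) \<le> 0"
    if C2: "C2_on \<Omega> \<phi> D\<phi> D2\<phi>" and c\<phi>: "convex_on \<Omega> \<phi>" and x: "x \<in> \<Omega>"
      and lm: "local_max_at \<Omega> (\<lambda>y. u y - \<phi> y) x" for \<phi> D\<phi> D2\<phi> x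
  proof -
    have H: "bellmanH (D2\<phi> x) (f x) \<le> 0" using sub C2 x lm unfolding visc_sub_def by blast
    show ?thesis
      by (rule ma_sub[OF hess_sym[OF C2 op x] _ _ H]) (use convex_psd[OF C2 op c\<phi> x] f0 x in auto)
  qed
  have P: "0 \<le> mongeM (D2\<phi> x) (f x)"
    if C2: "C2_on \<Omega> \<phi> D\<phi> D2\<phi>" and c\<phi>: "convex_on \<Omega> \<phi>" and x: "x \<in> \<Omega>"
      and lm: "local_min_at \<Omega> (\<lambda>y. u y - \<phi> y) x" for \<phi> D\<phi> D2\<phi> x
  proof -
    have H: "0 \<le> bellmanH (D2\<phi> x) (f x)" using super C2 x lm unfolding visc_super_def by blast
    show ?thesis
      by (rule ma_super[OF hess_sym[OF C2 op x] _ _ H]) (use convex_psd[OF C2 op c\<phi> x] f0 x in auto)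
  qed
  show ?thesis
    unfolding visc_sol_cvx_def visc_sub_cvx_def visc_super_cvx_def
    using usc lsc cu S P by blast
qed

end
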